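(* Let $\Gamma$ be a graph satisfying Assumption (A), and fix an index $j$ of an entry of the trace vector that is not one of the forced-zero entries (i.e. not $B_i$ with $o(e_i)$ of degree one, nor $D_i$ with $\tau(e_i)$ of degree one). Then there exist $\boldsymbol{\ell}\in\mathbb{R}_+^N$ and an eigenpair $(k^2,f)$ of $(\Gamma,\boldsymbol{\ell})$ such that $k^2$ is a non-zero simple eigenvalue, $f$ is not supported on a single loop (if $\Gamma$ has loops), and $(\mathrm{tr}_k(f))_j\neq0$.
   Context: $\Gamma$: finite graph with edges $e_1,\dots,e_N$ oriented from $o(e_j)$ to $\tau(e_j)$; a loop has $o(e_j)=\tau(e_j)$. Assumption (A): connected, no vertex of degree two, some vertex of degree different from two. $(\Gamma,\boldsymbol{\ell})$: $e_j\cong[0,\ell_j]$ ($t=0$ at $o(e_j)$), Laplacian $-d^2/dt^2$ with standard vertex conditions (continuity at vertices and $\sum_{o(e_i)=v}f'|_{e_i}(0)-\sum_{\tau(e_i)=v}f'|_{e_i}(\ell_i)=0$). For an eigenpair with $k>0$: $f|_{e_i}(t)=A_i\cos(kt)+B_i\sin(kt)=C_i\cos(k(\ell_i-t))+D_i\sin(k(\ell_i-t))$; $\mathrm{tr}_k(f)\in\mathbb{C}^{4N}$ collects all $A_i,B_i,C_i,D_i$ ($B_i=f'|_{e_i}(0)/k$, $D_i=-f'|_{e_i}(\ell_i)/k$, which vanish at degree-one vertices). $f$ is supported on a single loop if for some loop $e_i$, $f$ vanishes identically on all other edges. *)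

theory Defs
  imports "HOL-Analysis.Analysis"
begin

text \<open>A finite graph: vertex set V, edges indexed by 0..<N, edge i oriented from
  org i to tgt i (a loop has org i = tgt i).\<close>

definition graph :: "'v set \<Rightarrow> nat \<Rightarrow> (nat \<Rightarrow> 'v) \<Rightarrow> (nat \<Rightarrow> 'v) \<Rightarrow> bool" where
  "graph V N org tgt \<longleftrightarrow> finite V \<and> (\<forall>i<N. org i \<in> V \<and> tgt i \<in> V)"

text \<open>Degree: number of edge ends at v (a loop contributes 2).\<close>
definition degree :: "nat \<Rightarrow> (nat \<Rightarrow> 'v) \<Rightarrow> (nat \<Rightarrow> 'v) \<Rightarrow> 'v \<Rightarrow> nat" where
  "degree N org tgt v = card {i. i < N \<and> org i = v} + card {i. i < N \<and> tgt i = v}"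

definition adj :: "nat \<Rightarrow> (nat \<Rightarrow> 'v) \<Rightarrow> (nat \<Rightarrow> 'v) \<Rightarrow> ('v \<times> 'v) set" where
  "adj N org tgt = {(org i, tgt i) | i. i < N} \<union> {(tgt i, org i) | i. i < N}"

definition connected_graph :: "'v set \<Rightarrow> nat \<Rightarrow> (nat \<Rightarrow> 'v) \<Rightarrow> (nat \<Rightarrow> 'v) \<Rightarrow> bool" where
  "connected_graph V N org tgt \<longleftrightarrow> (\<forall>u\<in>V. \<forall>v\<in>V. (u, v) \<in> (adj N org tgt)\<^sup>*)"

definition assumption_A :: "'v set \<Rightarrow> nat \<Rightarrow> (nat \<Rightarrow> 'v) \<Rightarrow> (nat \<Rightarrow> 'v) \<Rightarrow> bool" where
  "assumption_A V N org tgt \<longleftrightarrow>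
     graph V N org tgt \<and> connected_graph V N org tgt \<and>
     (\<forall>v\<in>V. degree N org tgt v \<noteq> 2) \<and> (\<exists>v\<in>V. degree N org tgt v \<noteq> 2)"

text \<open>A function on the metric graph: f i is the function on edge i, identified with
  [0, l i] (t = 0 at org i). Only the values on [0, l i] matter.
  Derivative along edge i (one-sided at the endpoints).\<close>
definition edge_deriv :: "(nat \<Rightarrow> real) \<Rightarrow> (nat \<Rightarrow> real \<Rightarrow> complex) \<Rightarrow> nat \<Rightarrow> real \<Rightarrow> complex" where
  "edge_deriv l f i t = vector_derivative (f i) (at t within {0..l i})"

definition eigenpair ::
  "'v set \<Rightarrow> nat \<Rightarrow> (nat \<Rightarrow> 'v) \<Rightarrow> (nat \<Rightarrow> 'v) \<Rightarrow> (nat \<Rightarrow> real) \<Rightarrow> real \<Rightarrow> (nat \<Rightarrow> real \<Rightarrow> complex) \<Rightarrow> bool" where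
  "eigenpair V N org tgt l lam f \<longleftrightarrow>
     \<comment> \<open>twice differentiable on each edge, with - f'' = lam f\<close>
     (\<forall>i<N. \<forall>t\<in>{0..l i}.
        (f i has_vector_derivative edge_deriv l f i t) (at t within {0..l i}) \<and>
        ((edge_deriv l f i) has_vector_derivative (- of_real lam * f i t)) (at t within {0..l i})) \<and>
     \<comment> \<open>not identically zero\<close>
     (\<exists>i<N. \<exists>t\<in>{0..l i}. f i t \<noteq> 0) \<and>
     \<comment> \<open>continuity at vertices\<close>
     (\<forall>i<N. \<forall>m<N.
        (org i = org m \<longrightarrow> f i 0 = f m 0) \<and>
        (org i = tgt m \<longrightarrow> f i 0 = f m (l m)) \<and>
        (tgt i = tgt m \<longrightarrow> f i (l i) = f m (l m))) \<and>
     \<comment> \<open>Kirchhoff condition\<close>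
     (\<forall>v\<in>V. (\<Sum>i\<in>{i. i < N \<and> org i = v}. edge_deriv l f i 0)
              - (\<Sum>i\<in>{i. i < N \<and> tgt i = v}. edge_deriv l f i (l i)) = 0)"

definition simple_eigenpair ::
  "'v set \<Rightarrow> nat \<Rightarrow> (nat \<Rightarrow> 'v) \<Rightarrow> (nat \<Rightarrow> 'v) \<Rightarrow> (nat \<Rightarrow> real) \<Rightarrow> real \<Rightarrow> (nat \<Rightarrow> real \<Rightarrow> complex) \<Rightarrow> bool" where
  "simple_eigenpair V N org tgt l lam f \<longleftrightarrow>
     eigenpair V N org tgt l lam f \<and>
     (\<forall>g. eigenpair V N org tgt l lam g \<longrightarrow>
          (\<exists>c::complex. \<forall>i<N. \<forall>t\<in>{0..l i}. g i t = c * f i t))"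

definition supported_on_single_loop ::
  "nat \<Rightarrow> (nat \<Rightarrow> 'v) \<Rightarrow> (nat \<Rightarrow> 'v) \<Rightarrow> (nat \<Rightarrow> real) \<Rightarrow> (nat \<Rightarrow> real \<Rightarrow> complex) \<Rightarrow> bool" where
  "supported_on_single_loop N org tgt l f \<longleftrightarrow>
     (\<exists>i<N. org i = tgt i \<and> (\<forall>m<N. m \<noteq> i \<longrightarrow> (\<forall>t\<in>{0..l m}. f m t = 0)))"

text \<open>Entries of the trace vector tr_k(f) in C^(4N): indexed by a coefficient kind and an
  edge index i < N.\<close>
datatype coeff = CA | CB | CC | CD

definition trace_k :: "(nat \<Rightarrow> real) \<Rightarrow> real \<Rightarrow> (nat \<Rightarrow> real \<Rightarrow> complex) \<Rightarrow> coeff \<times> nat \<Rightarrow> complex" where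
  "trace_k l k f j = (case j of
      (CA, i) \<Rightarrow> f i 0
    | (CB, i) \<Rightarrow> edge_deriv l f i 0 / of_real k
    | (CC, i) \<Rightarrow> f i (l i)
    | (CD, i) \<Rightarrow> - edge_deriv l f i (l i) / of_real k)"

definition admissible_index :: "nat \<Rightarrow> (nat \<Rightarrow> 'v) \<Rightarrow> (nat \<Rightarrow> 'v) \<Rightarrow> coeff \<times> nat \<Rightarrow> bool" where
  "admissible_index N org tgt j \<longleftrightarrow> snd j < N \<and>
     \<not> (fst j = CB \<and> degree N org tgt (org (snd j)) = 1) \<and>
     \<not> (fst j = CD \<and> degree N org tgt (tgt (snd j)) = 1)"

end

theory Submission
  imports Defs
begin


abbreviation cc :: "real \<Rightarrow> complex" where "cc t \<equiv> complex_of_real (cos t)"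
abbreviation ss :: "real \<Rightarrow> complex" where "ss t \<equiv> complex_of_real (sin t)"

lemma trig_deriv1:
  "((\<lambda>t. a * cc t + b * ss t) has_vector_derivative (- a * ss t + b * cc t)) (at t within S)"
  by (auto intro!: derivative_eq_intros simp: algebra_simps)

lemma trig_deriv2:
  "((\<lambda>t. - a * ss t + b * cc t) has_vector_derivative (- (a * cc t + b * ss t))) (at t within S)"
  by (auto intro!: derivative_eq_intros simp: algebra_simps)

lemma cc_deriv: "(cc has_vector_derivative - ss x) (at x within S)"
  by (auto intro!: derivative_eq_intros)
lemma ss_deriv: "(ss has_vector_derivative cc x) (at x within S)"
  by (auto intro!: derivative_eq_intros)

lemma ode_rep:
  fixes g g' :: "real \<Rightarrow> complex"
  assumes d1: "\<And>t. t \<in> {0..L} \<Longrightarrow> (g has_vector_derivative g' t) (at t within {0..L})"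
    and d2: "\<And>t. t \<in> {0..L} \<Longrightarrow> (g' has_vector_derivative - g t) (at t within {0..L})"
    and t: "t \<in> {0..L}"
  shows "g t = g 0 * cc t + g' 0 * ss t \<and> g' t = - g 0 * ss t + g' 0 * cc t"
proof -
  have L: "0 \<in> {0..L}" using t by auto
  have "\<And>x. x \<in> {0..L} \<Longrightarrow> ((\<lambda>t. g t * cc t - g' t * ss t) has_vector_derivative 0) (at x within {0..L})"
  proof -
    fix x assume x: "x \<in> {0..L}"
    have "((\<lambda>t. g t * cc t - g' t * ss t) has_vector_derivative
       (g x * (- ss x) + g' x * cc x - (g' x * cc x + (- g x) * ss x))) (at x within {0..L})"
      by (intro has_vector_derivative_diff has_vector_derivative_mult d1[OF x] d2[OF x] cc_deriv ss_deriv)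
    then show "((\<lambda>t. g t * cc t - g' t * ss t) has_vector_derivative 0) (at x within {0..L})"
      by (simp add: algebra_simps)
  qed
  then obtain u where u: "\<And>x. x \<in> {0..L} \<Longrightarrow> g x * cc x - g' x * ss x = u"
    by (rule has_vector_derivative_zero_constant[OF convex_real_interval(5)]) (assumption, metis)
  have "\<And>x. x \<in> {0..L} \<Longrightarrow> ((\<lambda>t. g t * ss t + g' t * cc t) has_vector_derivative 0) (at x within {0..L})"
  proof -
    fix x assume x: "x \<in> {0..L}"
    have "((\<lambda>t. g t * ss t + g' t * cc t) has_vector_derivative
       (g x * cc x + g' x * ss x + (g' x * (- ss x) + (- g x) * cc x))) (at x within {0..L})"
      by (intro has_vector_derivative_add has_vector_derivative_mult d1[OF x] d2[OF x] cc_deriv ss_deriv)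
    then show "((\<lambda>t. g t * ss t + g' t * cc t) has_vector_derivative 0) (at x within {0..L})"
      by (simp add: algebra_simps)
  qed
  then obtain w where w: "\<And>x. x \<in> {0..L} \<Longrightarrow> g x * ss x + g' x * cc x = w"
    by (rule has_vector_derivative_zero_constant[OF convex_real_interval(5)]) (assumption, metis)
  have u0: "u = g 0" using u[OF L] by simp
  have w0: "w = g' 0" using w[OF L] by simp
  have e1: "g t * cc t - g' t * ss t = g 0" using u[OF t] u0 by simp
  have e2: "g t * ss t + g' t * cc t = g' 0" using w[OF t] w0 by simp
  have cs: "cc t * cc t + ss t * ss t = 1"
    by (metis of_real_add of_real_mult of_real_1 sin_cos_squared_add3 add.commute)
  have "g t = g t * (cc t * cc t + ss t * ss t)" using cs by simp
  also have "\<dots> = (g t * cc t - g' t * ss t) * cc t + (g t * ss t + g' t * cc t) * ss t"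
    by (simp add: algebra_simps)
  finally have A: "g t = g 0 * cc t + g' 0 * ss t" using e1 e2 by simp
  have "g' t = g' t * (cc t * cc t + ss t * ss t)" using cs by simp
  also have "\<dots> = - (g t * cc t - g' t * ss t) * ss t + (g t * ss t + g' t * cc t) * cc t"
    by (simp add: algebra_simps)
  finally have B: "g' t = - g 0 * ss t + g' 0 * cc t" using e1 e2 by simp
  show ?thesis using A B by simp
qed


lemma card_fibers:
  assumes "finite V" "\<forall>i<N. h i \<in> V"
  shows "(\<Sum>v\<in>V. card {i. i < N \<and> h i = v}) = N"
proof -
  have "(\<Sum>v\<in>V. card {i. i < N \<and> h i = v}) = (\<Sum>v\<in>V. \<Sum>i\<in>{x. x \<in> {..<N} \<and> h x = v}. (1::nat))"
    by simp
  also have "\<dots> = (\<Sum>i\<in>{..<N}. (1::nat))"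
    by (rule sum.group) (use assms in auto)
  finally show ?thesis by simp
qed

lemma card_pos1: "i < (N::nat) \<Longrightarrow> P i \<Longrightarrow> 1 \<le> card {i. i < N \<and> P i}"
proof -
  assume a: "i < N" "P i"
  have "finite {i. i < N \<and> P i}" by (rule finite_subset[of _ "{..<N}"]) auto
  moreover have "i \<in> {i. i < N \<and> P i}" using a by simp
  ultimately have "0 < card {i. i < N \<and> P i}" using card_gt_0_iff by blast
  then show ?thesis by simp
qed

locale G =
  fixes V :: "'v set" and N :: nat and org tgt :: "nat \<Rightarrow> 'v"
  assumes A: "assumption_A V N org tgt" and Npos: "0 < N"
begin

abbreviation deg where "deg v \<equiv> degree N org tgt v"

definition Vp where "Vp = {v\<in>V. 3 \<le> deg v}"
definition Ep where "Ep = {i. i < N \<and> org i \<in> Vp \<and> tgt i \<in> Vp}"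
definition R :: "nat set \<Rightarrow> ('v \<times> 'v) set" where
  "R E = {(org i, tgt i) | i. i \<in> E} \<union> {(tgt i, org i) | i. i \<in> E}"
definition conn where "conn E \<longleftrightarrow> (\<forall>u\<in>Vp. \<forall>v\<in>Vp. (u, v) \<in> (R E)\<^sup>*)"

lemma finV: "finite V" using A by (simp add: assumption_A_def graph_def)
lemma inV: "i < N \<Longrightarrow> org i \<in> V \<and> tgt i \<in> V" using A by (simp add: assumption_A_def graph_def)
lemma deg2: "v \<in> V \<Longrightarrow> deg v \<noteq> 2" using A by (simp add: assumption_A_def)
lemma connG: "u \<in> V \<Longrightarrow> v \<in> V \<Longrightarrow> (u, v) \<in> (adj N org tgt)\<^sup>*"
  using A by (simp add: assumption_A_def connected_graph_def)
lemma finVp: "finite Vp" using finV by (simp add: Vp_def)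
lemma VpV: "Vp \<subseteq> V" by (auto simp: Vp_def)
lemma finEp: "finite Ep" by (simp add: Ep_def)

lemma deg_def': "deg v = card {i. i < N \<and> org i = v} + card {i. i < N \<and> tgt i = v}"
  by (simp add: degree_def)

lemma adj_edge: "(x, y) \<in> adj N org tgt \<Longrightarrow> \<exists>i<N. (org i = x \<and> tgt i = y) \<or> (tgt i = x \<and> org i = y)"
  by (auto simp: adj_def)

lemma org_deg_pos: "i < N \<Longrightarrow> org i = v \<Longrightarrow> 1 \<le> deg v"
  using card_pos1[of i N "\<lambda>i. org i = v"] by (simp add: deg_def')
lemma tgt_deg_pos: "i < N \<Longrightarrow> tgt i = v \<Longrightarrow> 1 \<le> deg v"
  using card_pos1[of i N "\<lambda>i. tgt i = v"] by (simp add: deg_def')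

lemma deg_pos: assumes "v \<in> V" shows "1 \<le> deg v"
proof (cases "v = org 0")
  case True then show ?thesis using org_deg_pos[OF Npos] by simp
next
  case False
  have "(v, org 0) \<in> (adj N org tgt)\<^sup>*" using connG[OF assms] inV[OF Npos] by simp
  then obtain y where "(v, y) \<in> adj N org tgt" using False by (cases rule: converse_rtranclE) auto
  then obtain i where "i < N" "org i = v \<or> tgt i = v" using adj_edge by blast
  then show ?thesis using org_deg_pos tgt_deg_pos by blast
qed

lemma leaf_or_Vp: "v \<in> V \<Longrightarrow> deg v = 1 \<or> v \<in> Vp"
  using deg_pos[of v] deg2[of v] by (auto simp: Vp_def)

lemma leaf_unique:
  assumes "deg v = 1" "i < N" "m < N"
  shows "org i = v \<Longrightarrow> org m = v \<Longrightarrow> i = m"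
    and "tgt i = v \<Longrightarrow> tgt m = v \<Longrightarrow> i = m"
    and "org i = v \<Longrightarrow> tgt m = v \<Longrightarrow> False"
proof -
  have f1: "finite {i. i < N \<and> org i = v}" "finite {i. i < N \<and> tgt i = v}" by auto
  show "org i = v \<Longrightarrow> org m = v \<Longrightarrow> i = m"
  proof (rule ccontr)
    assume "org i = v" "org m = v" "i \<noteq> m"
    then have "{i, m} \<subseteq> {i. i < N \<and> org i = v}" using assms by auto
    then have "card {i, m} \<le> card {i. i < N \<and> org i = v}" by (intro card_mono f1)
    then show False using assms(1) \<open>i \<noteq> m\<close> by (simp add: deg_def')
  qed
  show "tgt i = v \<Longrightarrow> tgt m = v \<Longrightarrow> i = m"
  proof (rule ccontr)
    assume "tgt i = v" "tgt m = v" "i \<noteq> m"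
    then have "{i, m} \<subseteq> {i. i < N \<and> tgt i = v}" using assms by auto
    then have "card {i, m} \<le> card {i. i < N \<and> tgt i = v}" by (intro card_mono f1)
    then show False using assms(1) \<open>i \<noteq> m\<close> by (simp add: deg_def')
  qed
  show "org i = v \<Longrightarrow> tgt m = v \<Longrightarrow> False"
  proof -
    assume "org i = v" "tgt m = v"
    then have "card {i. i < N \<and> org i = v} \<ge> 1" "card {i. i < N \<and> tgt i = v} \<ge> 1"
      using assms(2,3) card_pos1[of i N "\<lambda>i. org i = v"] card_pos1[of m N "\<lambda>i. tgt i = v"] by auto
    moreover have "card {i. i < N \<and> org i = v} + card {i. i < N \<and> tgt i = v} = 1"
      using assms(1) deg_def' by simp
    ultimately show False by linarith
  qed
qed

lemma handshake: "(\<Sum>v\<in>V. deg v) = 2 * N"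
proof -
  have "(\<Sum>v\<in>V. deg v) = (\<Sum>v\<in>V. card {i. i < N \<and> org i = v}) + (\<Sum>v\<in>V. card {i. i < N \<and> tgt i = v})"
    unfolding deg_def' by (rule sum.distrib)
  then show ?thesis using card_fibers[OF finV, of N org] card_fibers[OF finV, of N tgt] inV by simp
qed

lemma card_Vp: "3 * card Vp \<le> 2 * N"
proof -
  have "3 * card Vp = (\<Sum>v\<in>Vp. 3)" by simp
  also have "\<dots> \<le> (\<Sum>v\<in>Vp. deg v)" by (intro sum_mono) (auto simp: Vp_def)
  also have "\<dots> \<le> (\<Sum>v\<in>V. deg v)" by (intro sum_mono2 finV VpV) auto
  finally show ?thesis using handshake by simp
qed

lemma leaf_nb:
  assumes "deg x = 1" "(x, y) \<in> adj N org tgt" "(x, z) \<in> adj N org tgt"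
  shows "y = z"
proof -
  obtain m1 where m1: "m1 < N" "(org m1 = x \<and> tgt m1 = y) \<or> (tgt m1 = x \<and> org m1 = y)"
    using adj_edge[OF assms(2)] by blast
  obtain m2 where m2: "m2 < N" "(org m2 = x \<and> tgt m2 = z) \<or> (tgt m2 = x \<and> org m2 = z)"
    using adj_edge[OF assms(3)] by blast
  show ?thesis using m1 m2 leaf_unique[OF assms(1) m1(1) m2(1)] leaf_unique[OF assms(1) m2(1) m1(1)]
    by blast
qed

lemma adj_sym: "(x, y) \<in> adj N org tgt \<Longrightarrow> (y, x) \<in> adj N org tgt"
  by (auto simp: adj_def)

lemma two_leaves:
  assumes i: "i < N" and d1: "deg (org i) = 1" and d2: "deg (tgt i) = 1"
    and x: "(org i, x) \<in> (adj N org tgt)\<^sup>*"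
  shows "x = org i \<or> x = tgt i"
  using x
proof (induction rule: rtrancl_induct)
  case base then show ?case by simp
next
  case (step y z)
  obtain m where m: "m < N" "(org m = y \<and> tgt m = z) \<or> (tgt m = y \<and> org m = z)"
    using adj_edge[OF step.hyps(2)] by blast
  show ?case using step.IH
  proof
    assume y: "y = org i"
    show ?thesis using m leaf_unique[OF d1 i m(1)] y by blast
  next
    assume y: "y = tgt i"
    show ?thesis using m leaf_unique[OF d2 i m(1)] leaf_unique[OF d2 m(1) i] y by blast
  qed
qed

lemma edge_has_Vp:
  assumes "Vp \<noteq> {}" "i < N" shows "org i \<in> Vp \<or> tgt i \<in> Vp"
proof (rule ccontr)
  assume "\<not> ?thesis"
  then have d: "deg (org i) = 1" "deg (tgt i) = 1" using leaf_or_Vp inV[OF assms(2)] by auto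
  obtain v where v: "v \<in> Vp" using assms(1) by blast
  have "(org i, v) \<in> (adj N org tgt)\<^sup>*" using connG inV[OF assms(2)] v VpV by auto
  then have "v = org i \<or> v = tgt i" using two_leaves[OF assms(2) d] by blast
  then show False using v d by (auto simp: Vp_def)
qed

lemma single_edge:
  assumes "Vp = {}"
  shows "N = 1" "org 0 \<noteq> tgt 0" "deg (org 0) = 1" "deg (tgt 0) = 1"
proof -
  show d: "deg (org 0) = 1" "deg (tgt 0) = 1" using leaf_or_Vp inV[OF Npos] assms by auto
  show "org 0 \<noteq> tgt 0" using leaf_unique(3)[OF d(1) Npos Npos] by auto
  have "\<forall>m<N. m = 0"
  proof (intro allI impI)
    fix m assume m: "m < N"
    have "(org 0, org m) \<in> (adj N org tgt)\<^sup>*" using connG inV[OF Npos] inV[OF m] by auto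
    then have "org m = org 0 \<or> org m = tgt 0" using two_leaves[OF Npos d] by blast
    then show "m = 0" using leaf_unique[OF d(1) m Npos] leaf_unique[OF d(2) Npos m] leaf_unique[OF d(2) m Npos] by auto
  qed
  then show "N = 1" using Npos by (metis One_nat_def Suc_lessI lessI less_irrefl)
qed

lemma R_mono: "E \<subseteq> E' \<Longrightarrow> R E \<subseteq> R E'" by (auto simp: R_def)

lemma conn_Ep: "conn Ep"
proof -
  have claim: "x \<in> V \<and> ((x \<in> Vp \<and> (u, x) \<in> (R Ep)\<^sup>*) \<or>
      (deg x = 1 \<and> (\<exists>y\<in>Vp. (u, y) \<in> (R Ep)\<^sup>* \<and> (x, y) \<in> adj N org tgt)))"
    if u: "u \<in> Vp" and ux: "(u, x) \<in> (adj N org tgt)\<^sup>*" for u x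
    using ux
  proof (induction rule: rtrancl_induct)
    case base then show ?case using u VpV by auto
  next
    case (step x z)
    obtain m where m: "m < N" "(org m = x \<and> tgt m = z) \<or> (tgt m = x \<and> org m = z)"
      using adj_edge[OF step.hyps(2)] by blast
    have zV: "z \<in> V" using m inV by auto
    from step.IH show ?case
    proof (elim conjE disjE)
      assume xV: "x \<in> V" and xp: "x \<in> Vp" and ux: "(u, x) \<in> (R Ep)\<^sup>*"
      show ?thesis
      proof (cases "z \<in> Vp")
        case True
        then have "m \<in> Ep" using m xp by (auto simp: Ep_def)
        then have "(x, z) \<in> R Ep" using m by (auto simp: R_def)
        then have "(u, z) \<in> (R Ep)\<^sup>*" using ux by (rule rtrancl_into_rtrancl[rotated])
        then show ?thesis using True zV by auto
      next
        case False
        then have "deg z = 1" using leaf_or_Vp zV by auto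
        then show ?thesis using zV xp ux adj_sym[OF step.hyps(2)] by auto
      qed
    next
      assume "x \<in> V" "deg x = 1" "\<exists>y\<in>Vp. (u, y) \<in> (R Ep)\<^sup>* \<and> (x, y) \<in> adj N org tgt"
      then obtain y where y: "y \<in> Vp" "(u, y) \<in> (R Ep)\<^sup>*" "(x, y) \<in> adj N org tgt" by blast
      have "y = z" using leaf_nb[OF \<open>deg x = 1\<close> y(3) step.hyps(2)] .
      then show ?thesis using y zV by auto
    qed
  qed
  show ?thesis unfolding conn_def
  proof (intro ballI)
    fix u v assume u: "u \<in> Vp" and v: "v \<in> Vp"
    have "(u, v) \<in> (adj N org tgt)\<^sup>*" using connG u v VpV by auto
    from claim[OF u this] show "(u, v) \<in> (R Ep)\<^sup>*" using v by (auto simp: Vp_def)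
  qed
qed

lemma edge_at: assumes "v \<in> V" shows "\<exists>i<N. org i = v \<or> tgt i = v"
proof (rule ccontr)
  assume "\<not> ?thesis"
  then have "{i. i < N \<and> org i = v} = {}" "{i. i < N \<and> tgt i = v} = {}" by auto
  then have "deg v = 0" by (simp add: deg_def')
  then show False using deg_pos[OF assms] by simp
qed

lemma leaf_sets_org:
  assumes "deg x = 1" "i < N" "org i = x"
  shows "{m. m < N \<and> org m = x} = {i}" "{m. m < N \<and> tgt m = x} = {}"
proof -
  have u: "m < N \<Longrightarrow> org m = x \<Longrightarrow> m = i" for m using leaf_unique(1)[OF assms(1) assms(2), of m] assms(3) by blast
  have v: "m < N \<Longrightarrow> tgt m = x \<Longrightarrow> False" for m using leaf_unique(3)[OF assms(1) assms(2), of m] assms(3) by blast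
  show "{m. m < N \<and> org m = x} = {i}" using u assms(2,3) by blast
  show "{m. m < N \<and> tgt m = x} = {}" using v by blast
qed

lemma leaf_sets_tgt:
  assumes "deg x = 1" "i < N" "tgt i = x"
  shows "{m. m < N \<and> tgt m = x} = {i}" "{m. m < N \<and> org m = x} = {}"
proof -
  have u: "m < N \<Longrightarrow> tgt m = x \<Longrightarrow> m = i" for m using leaf_unique(2)[OF assms(1) assms(2), of m] assms(3) by blast
  have v: "m < N \<Longrightarrow> org m = x \<Longrightarrow> False" for m using leaf_unique(3)[OF assms(1) _ assms(2), of m] assms(3) by blast
  show "{m. m < N \<and> tgt m = x} = {i}" using u assms(2,3) by blast
  show "{m. m < N \<and> org m = x} = {}" using v by blast
qed

end


locale Tr = G V N org tgt for V :: "'v set" and N org tgt +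
  fixes E0 :: "nat set" and r :: 'v
  assumes E0: "E0 \<subseteq> Ep" and cE0: "conn E0" and r: "r \<in> Vp"
begin

definition dist where "dist v = (LEAST n. (r, v) \<in> (R E0) ^^ n)"
definition par where "par v = (SOME i. i \<in> E0 \<and> ((org i = v \<and> Suc (dist (tgt i)) = dist v) \<or> (tgt i = v \<and> Suc (dist (org i)) = dist v)))"
definition T where "T = par ` (Vp - {r})"
definition dv :: "(nat \<Rightarrow> complex) \<Rightarrow> 'v \<Rightarrow> complex" where
  "dv \<beta> x = (\<Sum>i\<in>{i\<in>T. org i = x}. \<beta> i) - (\<Sum>i\<in>{i\<in>T. tgt i = x}. \<beta> i)"

lemma dist_ok: assumes "v \<in> Vp" shows "(r, v) \<in> (R E0) ^^ dist v"
proof -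
  have "(r, v) \<in> (R E0)\<^sup>*" using cE0 r assms by (auto simp: conn_def)
  then obtain n where "(r, v) \<in> (R E0) ^^ n" using rtrancl_power by blast
  then show ?thesis unfolding dist_def by (rule LeastI)
qed

lemma dist_le: "(r, v) \<in> (R E0) ^^ n \<Longrightarrow> dist v \<le> n"
  unfolding dist_def by (rule Least_le)

lemma dist_r: "dist r = 0"
  using dist_le[of r 0] by simp

lemma RE0: "(x, y) \<in> R E0 \<Longrightarrow> \<exists>i\<in>E0. (org i = x \<and> tgt i = y) \<or> (tgt i = x \<and> org i = y)"
  by (auto simp: R_def)

lemma E0_Vp: "i \<in> E0 \<Longrightarrow> org i \<in> Vp \<and> tgt i \<in> Vp \<and> i < N"
  using E0 by (auto simp: Ep_def)

lemma par_ok: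
  assumes v: "v \<in> Vp" "v \<noteq> r"
  shows "par v \<in> E0 \<and> ((org (par v) = v \<and> Suc (dist (tgt (par v))) = dist v) \<or>
           (tgt (par v) = v \<and> Suc (dist (org (par v))) = dist v))"
proof -
  have dv0: "dist v \<noteq> 0"
  proof
    assume "dist v = 0"
    then show False using dist_ok[OF v(1)] v(2) by simp
  qed
  then obtain m where m: "dist v = Suc m" using not0_implies_Suc by blast
  have "(r, v) \<in> (R E0) ^^ m O R E0" using dist_ok[OF v(1)] m by simp
  then obtain u where u1: "(r, u) \<in> (R E0) ^^ m" and u2: "(u, v) \<in> R E0" by blast
  have "dist u \<le> m" using dist_le[OF u1] .
  moreover have "(r, u) \<in> (R E0) ^^ dist u" using u1 unfolding dist_def by (rule LeastI)
  then have "(r, v) \<in> (R E0) ^^ Suc (dist u)" using u2 by auto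
  then have "dist v \<le> Suc (dist u)" by (rule dist_le)
  ultimately have du: "Suc (dist u) = dist v" using m by simp
  obtain i where i: "i \<in> E0" "(org i = u \<and> tgt i = v) \<or> (tgt i = u \<and> org i = v)"
    using RE0[OF u2] by blast
  have "\<exists>i. i \<in> E0 \<and> ((org i = v \<and> Suc (dist (tgt i)) = dist v) \<or> (tgt i = v \<and> Suc (dist (org i)) = dist v))"
    using i du by blast
  then show ?thesis unfolding par_def by (rule someI_ex)
qed

definition oth where "oth i v = (if org i = v then tgt i else org i)"

lemma par_props:
  assumes v: "v \<in> Vp" "v \<noteq> r"
  shows "par v \<in> E0" "par v \<in> Ep" "par v < N" "oth (par v) v \<in> Vp" "Suc (dist (oth (par v) v)) = dist v"
    "org (par v) = v \<or> tgt (par v) = v" "org (par v) \<noteq> tgt (par v)"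
    "org (par v) = v \<Longrightarrow> tgt (par v) = oth (par v) v"
    "tgt (par v) = v \<Longrightarrow> org (par v) = oth (par v) v"
proof -
  note po = par_ok[OF v]
  show p1: "par v \<in> E0" using po by blast
  show "par v \<in> Ep" using p1 E0 by blast
  show "par v < N" using E0_Vp[OF p1] by blast
  show "oth (par v) v \<in> Vp" using E0_Vp[OF p1] unfolding oth_def by simp
  show "Suc (dist (oth (par v) v)) = dist v" using po unfolding oth_def by (cases "org (par v) = v") simp_all
  show "org (par v) = v \<or> tgt (par v) = v" using po by blast
  show "org (par v) \<noteq> tgt (par v)"
  proof
    assume "org (par v) = tgt (par v)"
    then show False using po by (cases "org (par v) = v") simp_all
  qed
  show "org (par v) = v \<Longrightarrow> tgt (par v) = oth (par v) v" unfolding oth_def by simp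
  show "tgt (par v) = v \<Longrightarrow> org (par v) = oth (par v) v"
  proof -
    assume a: "tgt (par v) = v"
    show "org (par v) = oth (par v) v"
    proof (cases "org (par v) = v")
      case True then show ?thesis using po a by simp
    qed (simp add: oth_def)
  qed
qed

lemma T_E0: "T \<subseteq> E0" unfolding T_def using par_props(1) by blast
lemma T_N: "i \<in> T \<Longrightarrow> i < N" unfolding T_def using par_props(3) by blast
lemma finT: "finite T" using finVp by (simp add: T_def)

lemma inj_par: "inj_on par (Vp - {r})"
proof (rule inj_onI)
  fix v w assume v: "v \<in> Vp - {r}" and w: "w \<in> Vp - {r}" and e: "par v = par w"
  show "v = w"
  proof (rule ccontr)
    assume ne: "v \<noteq> w"
    have pv: "org (par v) = v \<or> tgt (par v) = v" "Suc (dist (oth (par v) v)) = dist v"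
      using par_props(5,6)[of v] v by auto
    have pw: "org (par w) = w \<or> tgt (par w) = w" "Suc (dist (oth (par w) w)) = dist w"
      using par_props(5,6)[of w] w by auto
    have pw1: "org (par v) = w \<or> tgt (par v) = w" using pw(1) e by simp
    have ends: "(org (par v) = v \<and> tgt (par v) = w) \<or> (org (par v) = w \<and> tgt (par v) = v)"
      using pv(1) pw1 ne by auto
    have o1: "oth (par v) v = w" using ends ne unfolding oth_def by auto
    have o2: "oth (par w) w = v" using ends ne unfolding oth_def e[symmetric] by auto
    have "Suc (dist w) = dist v" using pv(2) o1 by simp
    moreover have "Suc (dist v) = dist w" using pw(2) o2 by simp
    ultimately show False by simp
  qed
qed

lemma card_T: "card T = card Vp - 1"
proof -
  have "card T = card (Vp - {r})" unfolding T_def by (rule card_image[OF inj_par])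
  also have "\<dots> = card Vp - 1" using r finVp by (simp add: card_Diff_singleton)
  finally show ?thesis .
qed

lemma T_end:
  assumes "i \<in> T" "x = org i \<or> x = tgt i"
  shows "\<exists>w\<in>Vp - {r}. i = par w \<and> (x = w \<or> Suc (dist x) = dist w)"
proof -
  obtain w where w: "w \<in> Vp - {r}" "i = par w" using assms(1) by (auto simp: T_def)
  have "x = w \<or> x = oth (par w) w" using par_props(6)[of w] w assms(2) by (auto simp: oth_def)
  then show ?thesis using w par_props(5)[of w] by auto
qed

lemma T_induct:
  assumes "P r" "\<And>i. i \<in> T \<Longrightarrow> P (org i) = P (tgt i)" "v \<in> Vp"
  shows "P v"
proof -
  have "\<forall>v\<in>Vp. dist v = n \<longrightarrow> P v" for n
  proof (induction n rule: less_induct)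
    case (less n)
    show ?case
    proof (intro ballI impI)
      fix v assume v: "v \<in> Vp" "dist v = n"
      show "P v"
      proof (cases "v = r")
        case True then show ?thesis using assms(1) by simp
      next
        case False
        have p: "oth (par v) v \<in> Vp" "Suc (dist (oth (par v) v)) = dist v"
          using par_props(4,5)[OF v(1) False] by auto
        have "P (oth (par v) v)" using less p v(2) by auto
        moreover have "par v \<in> T" using v(1) False by (auto simp: T_def)
        moreover have "org (par v) = v \<and> tgt (par v) = oth (par v) v \<or> tgt (par v) = v \<and> org (par v) = oth (par v) v"
          using par_props(6,8,9)[OF v(1) False] by blast
        ultimately show ?thesis using assms(2)[of "par v"] by auto
      qed
    qed
  qed
  then show ?thesis using assms(3) by blast
qed

end


context Tr begin

lemma dv_add: "dv (\<lambda>i. \<beta>1 i + \<beta>2 i) x = dv \<beta>1 x + dv \<beta>2 x"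
  by (simp add: dv_def sum.distrib)
lemma dv_diff: "dv (\<lambda>i. \<beta>1 i - \<beta>2 i) x = dv \<beta>1 x - dv \<beta>2 x"
  by (simp add: dv_def sum_subtractf)
lemma dv_zero: "dv (\<lambda>i. 0) x = 0"
  by (simp add: dv_def)

lemma dv_sum:
  assumes "finite A"
  shows "dv (\<lambda>i. \<Sum>v\<in>A. c v * \<phi> v i) x = (\<Sum>v\<in>A. c v * dv (\<phi> v) x)"
proof -
  have "dv (\<lambda>i. \<Sum>v\<in>A. c v * \<phi> v i) x =
    (\<Sum>v\<in>A. \<Sum>i\<in>{i\<in>T. org i = x}. c v * \<phi> v i) - (\<Sum>v\<in>A. \<Sum>i\<in>{i\<in>T. tgt i = x}. c v * \<phi> v i)"
    unfolding dv_def by (simp add: sum.swap[of _ A])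
  also have "\<dots> = (\<Sum>v\<in>A. c v * dv (\<phi> v) x)"
    by (simp add: dv_def sum_distrib_left sum_subtractf right_diff_distrib)
  finally show ?thesis .
qed

lemma dv_ind:
  assumes "e \<in> T"
  shows "dv (\<lambda>i. if i = e then 1 else 0) x = of_bool (org e = x) - of_bool (tgt e = x)"
proof -
  have f1: "finite {i\<in>T. org i = x}" "finite {i\<in>T. tgt i = x}" using finT by auto
  have a: "(\<Sum>i\<in>{i\<in>T. org i = x}. (if i = e then 1 else 0::complex)) = of_bool (org e = x)"
    by (subst sum.delta[OF f1(1)]) (use assms in auto)
  have b: "(\<Sum>i\<in>{i\<in>T. tgt i = x}. (if i = e then 1 else 0::complex)) = of_bool (tgt e = x)"
    by (subst sum.delta[OF f1(2)]) (use assms in auto)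
  show ?thesis unfolding dv_def a b ..
qed

lemma sum_single:
  assumes "finite S" "\<And>i. i \<in> S \<Longrightarrow> i \<noteq> a \<Longrightarrow> f i = 0"
  shows "sum f S = (if a \<in> S then f a else 0)"
proof -
  have "sum f S = (\<Sum>i\<in>S. if i = a then f i else 0)"
    by (rule sum.cong) (use assms(2) in auto)
  also have "\<dots> = (if a \<in> S then f a else 0)" using sum.delta'[OF assms(1), of a f] by (simp add: eq_commute)
  finally show ?thesis .
qed

lemma dv_inj:
  assumes h: "\<And>x. x \<in> Vp \<Longrightarrow> dv \<beta> x = 0" and i: "i \<in> T"
  shows "\<beta> i = 0"
proof -
  define D where "D = Max (dist ` Vp)"
  have dD: "v \<in> Vp \<Longrightarrow> dist v \<le> D" for v unfolding D_def using finVp by simp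
  have "\<forall>v\<in>Vp - {r}. D - dist v = n \<longrightarrow> \<beta> (par v) = 0" for n
  proof (induction n rule: less_induct)
    case (less n)
    show ?case
    proof (intro ballI impI)
      fix v assume v: "v \<in> Vp - {r}" and n: "D - dist v = n"
      have vv: "v \<in> Vp" "v \<noteq> r" using v by auto
      have pT: "par v \<in> T" using v by (auto simp: T_def)
      have z: "\<beta> i = 0" if iT: "i \<in> T" and ine: "i \<noteq> par v" and iv: "org i = v \<or> tgt i = v" for i
      proof -
        obtain w where w: "w \<in> Vp - {r}" "i = par w" "v = w \<or> Suc (dist v) = dist w"
          using T_end[OF iT, of v] iv by auto
        have "v \<noteq> w" using ine w by auto
        then have "Suc (dist v) = dist w" using w by auto
        moreover have "dist w \<le> D" using dD w by auto
        ultimately have "D - dist w < n" using n by linarith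
        then show ?thesis using less w by auto
      qed
      have s1: "(\<Sum>i\<in>{i\<in>T. org i = v}. \<beta> i) = (if org (par v) = v then \<beta> (par v) else 0)"
        by (subst sum_single[of _ "par v"]) (use finT z pT in auto)
      have s2: "(\<Sum>i\<in>{i\<in>T. tgt i = v}. \<beta> i) = (if tgt (par v) = v then \<beta> (par v) else 0)"
        by (subst sum_single[of _ "par v"]) (use finT z pT in auto)
      have "dv \<beta> v = 0" using h vv by auto
      then show "\<beta> (par v) = 0" using s1 s2 par_props(6,7)[OF vv] unfolding dv_def
        by (auto split: if_splits)
    qed
  qed
  moreover obtain v where "v \<in> Vp - {r}" "i = par v" using i by (auto simp: T_def)
  ultimately show ?thesis by blast
qed

lemma path_flow:
  assumes "v \<in> Vp"
  shows "\<exists>\<phi>. \<forall>x. dv \<phi> x = of_bool (x = v) - of_bool (x = r)"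
proof -
  have "\<forall>v\<in>Vp. dist v = n \<longrightarrow> (\<exists>\<phi>. \<forall>x. dv \<phi> x = of_bool (x = v) - of_bool (x = r))" for n
  proof (induction n rule: less_induct)
    case (less n)
    show ?case
    proof (intro ballI impI)
      fix v assume v: "v \<in> Vp" "dist v = n"
      show "\<exists>\<phi>. \<forall>x. dv \<phi> x = of_bool (x = v) - of_bool (x = r)"
      proof (cases "v = r")
        case True
        then show ?thesis using dv_zero by auto
      next
        case False
        define p where "p = oth (par v) v"
        define e where "e = par v"
        have p: "p \<in> Vp" "Suc (dist p) = dist v" using par_props(4,5)[OF v(1) False] by (auto simp: p_def)
        have "\<exists>\<phi>. \<forall>x. dv \<phi> x = of_bool (x = p) - of_bool (x = r)"
          using less[of "dist p"] p v(2) by auto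
        then obtain \<phi> where \<phi>: "\<forall>x. dv \<phi> x = of_bool (x = p) - of_bool (x = r)" by blast
        have eT: "e \<in> T" using v(1) False by (auto simp: T_def e_def)
        have ends: "(org e = v \<and> tgt e = p) \<or> (tgt e = v \<and> org e = p)"
          using par_props(6,8,9)[OF v(1) False] unfolding e_def p_def by blast
        show ?thesis
        proof (cases "org e = v \<and> tgt e = p")
          case True
          have "dv (\<lambda>i. \<phi> i + (if i = e then 1 else 0)) x = of_bool (x = v) - of_bool (x = r)" for x
            using dv_add[of \<phi> "\<lambda>i. if i = e then 1 else 0" x] dv_ind[OF eT, of x] \<phi> True
            by auto
          then show ?thesis by blast
        next
          case False
          then have F: "tgt e = v" "org e = p" using ends by auto
          have "dv (\<lambda>i. \<phi> i - (if i = e then 1 else 0)) x = of_bool (x = v) - of_bool (x = r)" for x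
            using dv_diff[of \<phi> "\<lambda>i. if i = e then 1 else 0" x] dv_ind[OF eT, of x] \<phi> F
            by auto
          then show ?thesis by blast
        qed
      qed
    qed
  qed
  then show ?thesis using assms by blast
qed

lemma dv_surj:
  assumes s: "(\<Sum>x\<in>Vp. \<tau> x) = 0"
  shows "\<exists>\<beta>. \<forall>x\<in>Vp. dv \<beta> x = - \<tau> x"
proof -
  obtain \<Phi> where \<Phi>: "\<forall>v\<in>Vp. \<forall>x. dv (\<Phi> v) x = of_bool (x = v) - of_bool (x = r)"
    using path_flow by metis
  define \<beta> where "\<beta> = (\<lambda>i. \<Sum>v\<in>Vp. (- \<tau> v) * \<Phi> v i)"
  have "dv \<beta> x = - \<tau> x" if x: "x \<in> Vp" for x
  proof -
    have "dv \<beta> x = (\<Sum>v\<in>Vp. (- \<tau> v) * dv (\<Phi> v) x)" unfolding \<beta>_def by (rule dv_sum[OF finVp])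
    also have "\<dots> = (\<Sum>v\<in>Vp. (- \<tau> v) * (of_bool (x = v) - of_bool (x = r)))"
      using \<Phi> by (intro sum.cong) auto
    also have "\<dots> = (\<Sum>v\<in>Vp. of_bool (x = r) * \<tau> v - (if v = x then \<tau> v else 0))"
      by (intro sum.cong) auto
    also have "\<dots> = of_bool (x = r) * (\<Sum>v\<in>Vp. \<tau> v) - (\<Sum>v\<in>Vp. (if v = x then \<tau> v else 0))"
      by (simp add: sum_subtractf sum_distrib_left)
    also have "\<dots> = - \<tau> x" using s x finVp by (simp add: sum.delta')
    finally show ?thesis .
  qed
  then show ?thesis by blast
qed

lemma cut:
  assumes "finite S"
  shows "(\<Sum>x\<in>S. dv \<beta> x) = (\<Sum>i\<in>T. \<beta> i * (of_bool (org i \<in> S) - of_bool (tgt i \<in> S)))"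
proof -
  have a: "(\<Sum>x\<in>S. \<Sum>i\<in>{i\<in>T. h i = x}. \<beta> i) = (\<Sum>i\<in>T. \<beta> i * of_bool (h i \<in> S))" for h :: "nat \<Rightarrow> 'v"
  proof -
    have "(\<Sum>x\<in>S. \<Sum>i\<in>{i\<in>T. h i = x}. \<beta> i) = (\<Sum>x\<in>S. \<Sum>i\<in>T. if h i = x then \<beta> i else 0)"
      using finT by (simp add: sum.inter_filter)
    also have "\<dots> = (\<Sum>i\<in>T. \<Sum>x\<in>S. if h i = x then \<beta> i else 0)" by (rule sum.swap)
    also have "\<dots> = (\<Sum>i\<in>T. \<beta> i * of_bool (h i \<in> S))"
      using assms by (intro sum.cong) (auto simp: sum.delta)
    finally show ?thesis .
  qed
  show ?thesis unfolding dv_def sum_subtractf a[of org] a[of tgt]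
    by (simp add: right_diff_distrib sum_subtractf)
qed

lemma count_X:
  assumes X: "X \<subseteq> Vp" "X \<noteq> {}"
  shows "card {i\<in>T. org i \<in> X \<and> tgt i \<in> X} \<le> card X - 1"
proof -
  have fX: "finite X" using X finVp finite_subset by blast
  define m where "m = Min (dist ` X)"
  have "m \<in> dist ` X" unfolding m_def using X fX by (intro Min_in) auto
  then obtain s0 where s0: "s0 \<in> X" "dist s0 = m" by blast
  have sm: "x \<in> X \<Longrightarrow> m \<le> dist x" for x unfolding m_def using fX by simp
  have "{i\<in>T. org i \<in> X \<and> tgt i \<in> X} \<subseteq> par ` (X - {s0})"
  proof
    fix i assume i: "i \<in> {i\<in>T. org i \<in> X \<and> tgt i \<in> X}"
    obtain w where w: "w \<in> Vp - {r}" "i = par w" using i by (auto simp: T_def)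
    have ww: "w \<in> Vp" "w \<noteq> r" using w by auto
    have wX: "w \<in> X" using par_props(6)[OF ww] i w by auto
    have oX: "oth (par w) w \<in> X" using i w unfolding oth_def by auto
    have "w \<noteq> s0"
    proof
      assume "w = s0"
      then have "dist (oth (par w) w) < m" using par_props(5)[OF ww] s0 by simp
      then show False using sm[OF oX] by simp
    qed
    then show "i \<in> par ` (X - {s0})" using w wX by auto
  qed
  then have "card {i\<in>T. org i \<in> X \<and> tgt i \<in> X} \<le> card (par ` (X - {s0}))"
    by (intro card_mono) (use fX in auto)
  also have "\<dots> \<le> card (X - {s0})" by (rule card_image_le) (use fX in auto)
  also have "\<dots> = card X - 1" using s0 fX by simp
  finally show ?thesis .
qed

end


definition lenN :: "real \<Rightarrow> real" where
  "lenN t = (if 0 < t then 2 * arctan t else 2 * pi + 2 * arctan t)"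
definition lenP :: "real \<Rightarrow> real" where
  "lenP t = arctan t + pi"

lemma half_angle:
  assumes "t \<noteq> 0"
  shows "sin (2 * arctan t) \<noteq> 0 \<and> cos (2 * arctan t) + t * sin (2 * arctan t) = 1 \<and>
         t * cos (2 * arctan t) - sin (2 * arctan t) = - t"
proof -
  define a where "a = arctan t"
  have c: "cos a \<noteq> 0" unfolding a_def by simp
  have t: "t = sin a / cos a" unfolding a_def using tan_arctan[of t] by (simp add: tan_def)
  have s: "sin a = t * cos a" using t c by simp
  have ne: "sin a \<noteq> 0" using assms t by auto
  have e: "cos a ^ 2 + (t * cos a) ^ 2 = 1" using sin_cos_squared_add[of a] s by simp
  have S2: "sin (2 * a) = 2 * t * cos a ^ 2" using sin_double[of a] s by (simp add: power2_eq_square)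
  have C2: "cos (2 * a) = cos a ^ 2 - t ^ 2 * cos a ^ 2" using cos_double[of a] s by (simp add: power2_eq_square)
  have "sin (2 * a) \<noteq> 0" using sin_double[of a] ne c by simp
  moreover have "cos (2 * a) + t * sin (2 * a) = 1" unfolding S2 C2 using e by algebra
  moreover have "t * cos (2 * a) - sin (2 * a) = - t" unfolding S2 C2 using e by algebra
  ultimately show ?thesis unfolding a_def by blast
qed

lemma lenN:
  assumes "t \<noteq> 0"
  shows "0 < lenN t" "sin (lenN t) \<noteq> 0" "cos (lenN t) + t * sin (lenN t) = 1"
    "t * cos (lenN t) - sin (lenN t) = - t"
proof -
  have sc: "sin (lenN t) = sin (2 * arctan t)" "cos (lenN t) = cos (2 * arctan t)"
    unfolding lenN_def by (auto simp: sin_add cos_add)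
  show "0 < lenN t" unfolding lenN_def using arctan_lbound[of t] pi_gt_zero by (auto; linarith)
  show "sin (lenN t) \<noteq> 0" "cos (lenN t) + t * sin (lenN t) = 1" "t * cos (lenN t) - sin (lenN t) = - t"
    using half_angle[OF assms] sc by auto
qed

lemma lenP:
  shows "0 < lenP t" "cos (lenP t) \<noteq> 0" "sin (lenP t) = t * cos (lenP t)"
proof -
  show "0 < lenP t" unfolding lenP_def using arctan_lbound[of t] pi_gt_zero by linarith
  show "cos (lenP t) \<noteq> 0" unfolding lenP_def by (simp add: cos_add)
  have "t = sin (arctan t) / cos (arctan t)" using tan_arctan[of t] by (simp add: tan_def)
  then show "sin (lenP t) = t * cos (lenP t)" unfolding lenP_def by (simp add: sin_add cos_add field_simps)
qed


lemma trig_edge_deriv: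
  assumes "0 < l i" "t \<in> {0..l i}" "\<And>t. f i t = A * cc t + B * ss t"
  shows "edge_deriv l f i t = - A * ss t + B * cc t"
proof -
  have fe: "f i = (\<lambda>t. A * cc t + B * ss t)" using assms(3) by auto
  have d: "((f i) has_vector_derivative (- A * ss t + B * cc t)) (at t within cbox 0 (l i))"
    unfolding fe by (rule trig_deriv1)
  have t': "t \<in> cbox 0 (l i)" using assms(2) by simp
  have "vector_derivative (f i) (at t within cbox 0 (l i)) = - A * ss t + B * cc t"
    by (rule vector_derivative_within_cbox[OF assms(1) t' d])
  then show ?thesis unfolding edge_deriv_def by simp
qed

lemma trig_ode:
  assumes "0 < l i" "t \<in> {0..l i}" "\<And>t. f i t = A * cc t + B * ss t"
  shows "(f i has_vector_derivative edge_deriv l f i t) (at t within {0..l i}) \<and>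
        (edge_deriv l f i has_vector_derivative (- of_real 1 * f i t)) (at t within {0..l i})"
proof
  have fe: "f i = (\<lambda>t. A * cc t + B * ss t)" using assms(3) by auto
  show "(f i has_vector_derivative edge_deriv l f i t) (at t within {0..l i})"
    unfolding trig_edge_deriv[of l i t f A B, OF assms] unfolding fe by (rule trig_deriv1)
  show "(edge_deriv l f i has_vector_derivative (- of_real 1 * f i t)) (at t within {0..l i})"
  proof (rule has_vector_derivative_transform[of t "{0..l i}" "edge_deriv l f i" "\<lambda>t. - A * ss t + B * cc t"])
    show "t \<in> {0..l i}" by (rule assms(2))
    show "\<And>x. x \<in> {0..l i} \<Longrightarrow> edge_deriv l f i x = - A * ss x + B * cc x"
      using trig_edge_deriv[of l i _ f A B] assms(1,3) by blast
    show "((\<lambda>t. - A * ss t + B * cc t) has_vector_derivative - of_real 1 * f i t) (at t within {0..l i})"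
      using trig_deriv2[of A B t "{0..l i}"] assms(3)[of t] by simp
  qed
qed

lemma eig_rep:
  assumes "eigenpair V N org tgt l 1 g" "i < N" "t \<in> {0..l i}"
  shows "g i t = g i 0 * cc t + edge_deriv l g i 0 * ss t \<and>
         edge_deriv l g i t = - g i 0 * ss t + edge_deriv l g i 0 * cc t"
proof (rule ode_rep[of "l i" "g i" "edge_deriv l g i"])
  have h: "\<forall>i<N. \<forall>t\<in>{0..l i}.
        (g i has_vector_derivative edge_deriv l g i t) (at t within {0..l i}) \<and>
        ((edge_deriv l g i) has_vector_derivative (- of_real 1 * g i t)) (at t within {0..l i})"
    using assms(1) unfolding eigenpair_def by blast
  show "\<And>t. t \<in> {0..l i} \<Longrightarrow> (g i has_vector_derivative edge_deriv l g i t) (at t within {0..l i})"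
    using h assms(2) by blast
  show "\<And>t. t \<in> {0..l i} \<Longrightarrow> (edge_deriv l g i has_vector_derivative - g i t) (at t within {0..l i})"
    using h assms(2) by simp
  show "t \<in> {0..l i}" by (rule assms(3))
qed


context Tr begin

definition Q where "Q = {i. i < N \<and> i \<notin> T}"
definition tau :: "(nat \<Rightarrow> real) \<Rightarrow> 'v \<Rightarrow> complex" where
  "tau w x = (\<Sum>i\<in>{i\<in>Q. org i = x}. complex_of_real (w i)) + (\<Sum>i\<in>{i\<in>Q. tgt i = x}. complex_of_real (w i))"
definition len where "len w i = (if i \<in> T then 2 * pi else if i \<in> Ep then lenN (w i) else lenP (w i))"
definition Aco where "Aco w i = (if i \<in> T \<or> org i \<in> Vp then 1 else complex_of_real (1 / cos (len w i)))"
definition Bco where "Bco w \<beta> i = (if i \<in> T then \<beta> i else if org i \<in> Vp then complex_of_real (w i) else 0)"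
definition ff where "ff w \<beta> i t = Aco w i * cc t + Bco w \<beta> i * ss t"

lemma finQ: "finite Q" unfolding Q_def by simp
lemma T_Vp: "i \<in> T \<Longrightarrow> org i \<in> Vp \<and> tgt i \<in> Vp \<and> i \<in> Ep"
  using T_E0 E0 by (auto simp: Ep_def)
lemma Vp_ne: "Vp \<noteq> {}" using r by auto
lemma Q_cases: "i \<in> Q \<Longrightarrow> i \<in> Ep \<or> (org i \<in> Vp \<and> tgt i \<notin> Vp) \<or> (org i \<notin> Vp \<and> tgt i \<in> Vp)"
  using edge_has_Vp[OF Vp_ne] by (auto simp: Q_def Ep_def)

context
  fixes w :: "nat \<Rightarrow> real" and \<beta> :: "nat \<Rightarrow> complex"
  assumes wnz: "\<And>i. i \<in> Q \<Longrightarrow> w i \<noteq> 0"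
begin

lemma len_pos: "0 < len w i"
proof -
  have "i \<notin> T \<Longrightarrow> i \<in> Ep \<Longrightarrow> 0 < lenN (w i)"
    using lenN(1) wnz by (auto simp: Q_def Ep_def)
  then show ?thesis unfolding len_def using lenP(1) pi_gt_zero by auto
qed

lemma len_Q_Ep: "i \<in> Q \<Longrightarrow> i \<in> Ep \<Longrightarrow> len w i = lenN (w i)"
  by (auto simp: len_def Q_def)
lemma len_Q_nEp: "i \<in> Q \<Longrightarrow> i \<notin> Ep \<Longrightarrow> len w i = lenP (w i)"
  by (auto simp: len_def Q_def)
lemma len_T: "i \<in> T \<Longrightarrow> len w i = 2 * pi"
  by (auto simp: len_def)

lemma QorT: "i < N \<Longrightarrow> i \<in> Q \<or> i \<in> T" by (auto simp: Q_def)
lemma QT: "i \<in> Q \<Longrightarrow> i \<notin> T" by (auto simp: Q_def)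

lemma val0: "org i \<in> Vp \<Longrightarrow> Aco w i = 1" by (simp add: Aco_def)

lemma valL: assumes "i < N" "tgt i \<in> Vp"
  shows "Aco w i * cc (len w i) + Bco w \<beta> i * ss (len w i) = 1"
proof (cases "i \<in> T")
  case True then show ?thesis by (simp add: len_T Aco_def Bco_def)
next
  case False
  then have iQ: "i \<in> Q" using assms by (simp add: Q_def)
  show ?thesis
  proof (cases "i \<in> Ep")
    case True
    then have "org i \<in> Vp" by (simp add: Ep_def)
    then show ?thesis using lenN(3)[OF wnz[OF iQ]] False len_Q_Ep[OF iQ True]
      unfolding Aco_def Bco_def
      by (simp flip: of_real_mult of_real_add)
  next
    case nE: False
    then have "org i \<notin> Vp" using assms by (simp add: Ep_def)
    then show ?thesis using lenP(2)[of "w i"] False len_Q_nEp[OF iQ nE]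
      unfolding Aco_def Bco_def by (simp flip: of_real_mult)
  qed
qed

lemma der0_Q: "i \<in> Q \<Longrightarrow> org i \<in> Vp \<Longrightarrow> Bco w \<beta> i = w i"
  by (simp add: Bco_def QT)

lemma derL_Q: assumes iQ: "i \<in> Q" and t: "tgt i \<in> Vp"
  shows "- Aco w i * ss (len w i) + Bco w \<beta> i * cc (len w i) = - w i"
proof (cases "i \<in> Ep")
  case True
  then have "org i \<in> Vp" by (simp add: Ep_def)
  then show ?thesis using lenN(4)[OF wnz[OF iQ]] QT[OF iQ] len_Q_Ep[OF iQ True]
    unfolding Aco_def Bco_def
    by (simp flip: of_real_mult of_real_add of_real_minus of_real_diff add: algebra_simps)
next
  case nE: False
  then have o: "org i \<notin> Vp" using t iQ by (simp add: Ep_def Q_def)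
  have c: "cos (lenP (w i)) \<noteq> 0" by (rule lenP(2))
  have "- (sin (lenP (w i)) / cos (lenP (w i))) = - w i"
    using lenP(3)[of "w i"] c by simp
  then have h: "- (ss (lenP (w i)) / cc (lenP (w i))) = complex_of_real (- w i)"
    by (metis of_real_divide of_real_minus)
  show ?thesis using o QT[OF iQ] len_Q_nEp[OF iQ nE] h
    unfolding Aco_def Bco_def by simp
qed

lemma derT: "i \<in> T \<Longrightarrow> - Aco w i * ss (len w i) + Bco w \<beta> i * cc (len w i) = \<beta> i"
  by (simp add: len_T Aco_def Bco_def)

lemma der0_leaf: "i < N \<Longrightarrow> org i \<notin> Vp \<Longrightarrow> Bco w \<beta> i = 0"
  using T_Vp by (auto simp: Bco_def)

lemma derL_leaf: assumes "i < N" "tgt i \<notin> Vp"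
  shows "- Aco w i * ss (len w i) + Bco w \<beta> i * cc (len w i) = 0"
proof -
  have iQ: "i \<in> Q" using assms T_Vp by (auto simp: Q_def)
  have nE: "i \<notin> Ep" using assms by (simp add: Ep_def)
  have o: "org i \<in> Vp" using Q_cases[OF iQ] nE assms by auto
  show ?thesis using o QT[OF iQ] len_Q_nEp[OF iQ nE] lenP(3)[of "w i"]
    unfolding Aco_def Bco_def by (simp flip: of_real_mult)
qed

lemma Aco_nz: "Aco w i \<noteq> 0"
  using lenP(2) by (auto simp: Aco_def len_def Ep_def)

lemma valL_leaf_nz: assumes "i < N" "tgt i \<notin> Vp"
  shows "Aco w i * cc (len w i) + Bco w \<beta> i * ss (len w i) \<noteq> 0"
proof -
  have iQ: "i \<in> Q" using assms T_Vp by (auto simp: Q_def)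
  have nE: "i \<notin> Ep" using assms by (simp add: Ep_def)
  have o: "org i \<in> Vp" using Q_cases[OF iQ] nE assms by auto
  define L where "L = lenP (w i)"
  have c: "cos L \<noteq> 0" unfolding L_def by (rule lenP(2))
  have s: "sin L = w i * cos L" unfolding L_def by (rule lenP(3))
  have "cos L + w i * sin L = (1 + (w i)\<^sup>2) * cos L" using s by (simp add: algebra_simps power2_eq_square)
  moreover have "0 < 1 + (w i)\<^sup>2" by (simp add: add_pos_nonneg)
  ultimately have "cos L + w i * sin L \<noteq> 0" using c by simp
  then have "cc L + complex_of_real (w i) * ss L \<noteq> 0"
    by (metis of_real_add of_real_mult of_real_eq_0_iff)
  then show ?thesis using o QT[OF iQ] len_Q_nEp[OF iQ nE]
    unfolding Aco_def Bco_def L_def by simp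
qed


lemma dv_cong: "(\<And>i. i \<in> T \<Longrightarrow> \<beta>1 i = \<beta>2 i) \<Longrightarrow> dv \<beta>1 x = dv \<beta>2 x"
  unfolding dv_def by (intro arg_cong2[where f = minus] sum.cong) auto

lemma KS:
  assumes hQ: "\<And>i. i \<in> Q \<Longrightarrow> \<alpha> i = c * Aco w i \<and> \<gamma> i = c * Bco w \<beta> i"
    and hT: "\<And>i. i \<in> T \<Longrightarrow> \<alpha> i = c"
    and x: "x \<in> Vp"
  shows "(\<Sum>i\<in>{i. i < N \<and> org i = x}. \<gamma> i)
       - (\<Sum>i\<in>{i. i < N \<and> tgt i = x}. (- \<alpha> i * ss (len w i) + \<gamma> i * cc (len w i)))
       = dv \<gamma> x + c * tau w x"
proof -
  have so: "{i. i < N \<and> org i = x} = {i\<in>T. org i = x} \<union> {i\<in>Q. org i = x}"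
    using T_N by (auto simp: Q_def)
  have st: "{i. i < N \<and> tgt i = x} = {i\<in>T. tgt i = x} \<union> {i\<in>Q. tgt i = x}"
    using T_N by (auto simp: Q_def)
  have fT: "finite {i\<in>T. h i = x}" for h :: "nat \<Rightarrow> 'v" using finT by auto
  have fQ: "finite {i\<in>Q. h i = x}" for h :: "nat \<Rightarrow> 'v" using finQ by auto
  have dj: "{i\<in>T. h i = x} \<inter> {i\<in>Q. h i = x} = {}" for h :: "nat \<Rightarrow> 'v" by (auto simp: Q_def)
  have a1: "(\<Sum>i\<in>{i\<in>Q. org i = x}. \<gamma> i) = c * (\<Sum>i\<in>{i\<in>Q. org i = x}. complex_of_real (w i))"
    unfolding sum_distrib_left using hQ der0_Q x by (intro sum.cong) auto
  have a2: "(\<Sum>i\<in>{i\<in>Q. tgt i = x}. (- \<alpha> i * ss (len w i) + \<gamma> i * cc (len w i)))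
      = - c * (\<Sum>i\<in>{i\<in>Q. tgt i = x}. complex_of_real (w i))"
    unfolding sum_distrib_left
  proof (intro sum.cong refl)
    fix i assume i: "i \<in> {i\<in>Q. tgt i = x}"
    have "- \<alpha> i * ss (len w i) + \<gamma> i * cc (len w i) = c * (- Aco w i * ss (len w i) + Bco w \<beta> i * cc (len w i))"
      using hQ[of i] i by (simp add: algebra_simps)
    also have "\<dots> = - c * complex_of_real (w i)" using derL_Q[of i] i x by simp
    finally show "- \<alpha> i * ss (len w i) + \<gamma> i * cc (len w i) = - c * complex_of_real (w i)" .
  qed
  have a3: "(\<Sum>i\<in>{i\<in>T. tgt i = x}. (- \<alpha> i * ss (len w i) + \<gamma> i * cc (len w i)))
      = (\<Sum>i\<in>{i\<in>T. tgt i = x}. \<gamma> i)"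
    by (intro sum.cong) (auto simp: len_T)
  show ?thesis
    unfolding so st sum.union_disjoint[OF fT fQ dj] a1 a2 a3 dv_def tau_def
    by (simp add: algebra_simps)
qed

lemma ff_deriv:
  "t \<in> {0..len w i} \<Longrightarrow> edge_deriv (len w) (ff w \<beta>) i t = - Aco w i * ss t + Bco w \<beta> i * cc t"
  by (rule trig_edge_deriv[of "len w" i t "ff w \<beta>" "Aco w i" "Bco w \<beta> i", OF len_pos]) (simp_all add: ff_def)

lemma ff_deriv0: "edge_deriv (len w) (ff w \<beta>) i 0 = Bco w \<beta> i"
  using ff_deriv[of 0 i] len_pos[of i] by simp

lemma ff_derivL: "edge_deriv (len w) (ff w \<beta>) i (len w i) = - Aco w i * ss (len w i) + Bco w \<beta> i * cc (len w i)"
  using ff_deriv[of "len w i" i] len_pos[of i] by simp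

lemma ff0: "ff w \<beta> i 0 = Aco w i" by (simp add: ff_def)
lemma ffL: "ff w \<beta> i (len w i) = Aco w i * cc (len w i) + Bco w \<beta> i * ss (len w i)" by (simp add: ff_def)

lemma ff_eigen:
  assumes kir: "\<And>x. x \<in> Vp \<Longrightarrow> dv \<beta> x = - tau w x"
  shows "eigenpair V N org tgt (len w) 1 (ff w \<beta>)"
  unfolding eigenpair_def
proof (intro conjI)
  show "\<forall>i<N. \<forall>t\<in>{0..len w i}.
       (ff w \<beta> i has_vector_derivative edge_deriv (len w) (ff w \<beta>) i t) (at t within {0..len w i}) \<and>
       (edge_deriv (len w) (ff w \<beta>) i has_vector_derivative - complex_of_real 1 * ff w \<beta> i t) (at t within {0..len w i})"
  proof (intro allI impI ballI)
    fix i t assume "i < N" and tt: "t \<in> {0..len w i}"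
    show "(ff w \<beta> i has_vector_derivative edge_deriv (len w) (ff w \<beta>) i t) (at t within {0..len w i}) \<and>
       (edge_deriv (len w) (ff w \<beta>) i has_vector_derivative - complex_of_real 1 * ff w \<beta> i t) (at t within {0..len w i})"
      by (rule trig_ode[of "len w" i t "ff w \<beta>" "Aco w i" "Bco w \<beta> i", OF len_pos]) (use tt in \<open>simp_all add: ff_def\<close>)
  qed
  show "\<exists>i<N. \<exists>t\<in>{0..len w i}. ff w \<beta> i t \<noteq> 0"
  proof -
    have "0 \<in> {0..len w 0}" using len_pos[of 0] by simp
    moreover have "ff w \<beta> 0 0 \<noteq> 0" using Aco_nz[of 0] by (simp add: ff0)
    ultimately show ?thesis using Npos by blast
  qed
  show "\<forall>i<N. \<forall>m<N. (org i = org m \<longrightarrow> ff w \<beta> i 0 = ff w \<beta> m 0) \<and>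
          (org i = tgt m \<longrightarrow> ff w \<beta> i 0 = ff w \<beta> m (len w m)) \<and>
          (tgt i = tgt m \<longrightarrow> ff w \<beta> i (len w i) = ff w \<beta> m (len w m))"
  proof (intro allI impI conjI)
    fix i m assume i: "i < N" and m: "m < N"
    show "ff w \<beta> i 0 = ff w \<beta> m 0" if e: "org i = org m"
    proof (cases "org i \<in> Vp")
      case True
      then have "org m \<in> Vp" using e by simp
      then show ?thesis using True unfolding ff0 by (simp only: val0)
    next
      case False
      then have d: "deg (org i) = 1" using leaf_or_Vp[OF conjunct1[OF inV[OF i]]] by blast
      have "i = m" using leaf_unique(1)[OF d i m] e by metis
      then show ?thesis by simp
    qed
    show "ff w \<beta> i 0 = ff w \<beta> m (len w m)" if e: "org i = tgt m"
    proof (cases "org i \<in> Vp")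
      case True
      then have "tgt m \<in> Vp" using e by simp
      then show ?thesis using True valL[OF m] unfolding ff0 ffL by (simp only: val0)
    next
      case False
      then have d: "deg (org i) = 1" using leaf_or_Vp[OF conjunct1[OF inV[OF i]]] by blast
      show ?thesis using leaf_unique(3)[OF d i m] e by metis
    qed
    show "ff w \<beta> i (len w i) = ff w \<beta> m (len w m)" if e: "tgt i = tgt m"
    proof (cases "tgt i \<in> Vp")
      case True
      then have "tgt m \<in> Vp" using e by simp
      then show ?thesis using True valL[OF m] valL[OF i] unfolding ffL by simp
    next
      case False
      then have d: "deg (tgt i) = 1" using leaf_or_Vp[OF conjunct2[OF inV[OF i]]] by blast
      have "i = m" using leaf_unique(2)[OF d i m] e by metis
      then show ?thesis by simp
    qed
  qed
  show "\<forall>v\<in>V. (\<Sum>i\<in>{i. i < N \<and> org i = v}. edge_deriv (len w) (ff w \<beta>) i 0) -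
        (\<Sum>i\<in>{i. i < N \<and> tgt i = v}. edge_deriv (len w) (ff w \<beta>) i (len w i)) = 0"
  proof
    fix v assume v: "v \<in> V"
    show "(\<Sum>i\<in>{i. i < N \<and> org i = v}. edge_deriv (len w) (ff w \<beta>) i 0) -
        (\<Sum>i\<in>{i. i < N \<and> tgt i = v}. edge_deriv (len w) (ff w \<beta>) i (len w i)) = 0"
    proof (cases "v \<in> Vp")
      case True
      have "(\<Sum>i\<in>{i. i < N \<and> org i = v}. edge_deriv (len w) (ff w \<beta>) i 0) -
        (\<Sum>i\<in>{i. i < N \<and> tgt i = v}. edge_deriv (len w) (ff w \<beta>) i (len w i))
        = dv (Bco w \<beta>) v + 1 * tau w v"
        unfolding ff_deriv0 ff_derivL
        by (rule KS[where \<alpha> = "Aco w"]) (use True in \<open>auto simp: Aco_def QT\<close>)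
      also have "\<dots> = dv \<beta> v + tau w v" using dv_cong[of "Bco w \<beta>" \<beta> v] by (simp add: Bco_def)
      finally show ?thesis using kir[OF True] by simp
    next
      case False
      have "(\<Sum>i\<in>{i. i < N \<and> org i = v}. edge_deriv (len w) (ff w \<beta>) i 0) = 0"
        using der0_leaf False by (intro sum.neutral) (simp add: ff_deriv0)
      moreover have "(\<Sum>i\<in>{i. i < N \<and> tgt i = v}. edge_deriv (len w) (ff w \<beta>) i (len w i)) = 0"
        using derL_leaf False by (intro sum.neutral) (simp add: ff_derivL)
      ultimately show ?thesis by simp
    qed
  qed
qed


lemma dv_scale: "dv (\<lambda>i. a * \<beta>' i) x = a * dv \<beta>' x"
  by (simp add: dv_def sum_distrib_left right_diff_distrib)

lemma ff_simple:
  assumes kir: "\<And>x. x \<in> Vp \<Longrightarrow> dv \<beta> x = - tau w x"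
    and g: "eigenpair V N org tgt (len w) 1 g"
  shows "\<exists>c. \<forall>i<N. \<forall>t\<in>{0..len w i}. g i t = c * ff w \<beta> i t"
proof -
  define \<alpha> where "\<alpha> i = g i 0" for i
  define \<gamma> where "\<gamma> i = edge_deriv (len w) g i 0" for i
  have rep: "g i t = \<alpha> i * cc t + \<gamma> i * ss t \<and> edge_deriv (len w) g i t = - \<alpha> i * ss t + \<gamma> i * cc t"
    if "i < N" "t \<in> {0..len w i}" for i t
    unfolding \<alpha>_def \<gamma>_def by (rule eig_rep[OF g that])
  have Lin: "len w i \<in> {0..len w i}" for i using len_pos[of i] by simp
  have gL: "g i (len w i) = \<alpha> i * cc (len w i) + \<gamma> i * ss (len w i)" if "i < N" for i
    using rep[OF that Lin] by blast
  have dL: "edge_deriv (len w) g i (len w i) = - \<alpha> i * ss (len w i) + \<gamma> i * cc (len w i)" if "i < N" for i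
    using rep[OF that Lin] by blast
  have cont: "\<forall>i<N. \<forall>m<N. (org i = org m \<longrightarrow> g i 0 = g m 0) \<and>
        (org i = tgt m \<longrightarrow> g i 0 = g m (len w m)) \<and>
        (tgt i = tgt m \<longrightarrow> g i (len w i) = g m (len w m))"
    using g unfolding eigenpair_def by blast
  have kg: "\<forall>v\<in>V. (\<Sum>i\<in>{i. i < N \<and> org i = v}. edge_deriv (len w) g i 0)
              - (\<Sum>i\<in>{i. i < N \<and> tgt i = v}. edge_deriv (len w) g i (len w i)) = 0"
    using g unfolding eigenpair_def by blast
  define EV where "EV x c \<longleftrightarrow> (\<forall>i<N. (org i = x \<longrightarrow> g i 0 = c) \<and> (tgt i = x \<longrightarrow> g i (len w i) = c))" for x c
  have cont_org: "EV (org m) (g m 0)" if m: "m < N" for m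
    unfolding EV_def
  proof (intro allI impI conjI)
    fix i assume i: "i < N"
    show "org i = org m \<Longrightarrow> g i 0 = g m 0" using cont i m by blast
    show "tgt i = org m \<Longrightarrow> g i (len w i) = g m 0"
    proof -
      assume "tgt i = org m"
      then have "org m = tgt i" by simp
      then show "g i (len w i) = g m 0" using cont i m by metis
    qed
  qed
  have cont_tgt: "EV (tgt m) (g m (len w m))" if m: "m < N" for m
    unfolding EV_def
  proof (intro allI impI conjI)
    fix i assume i: "i < N"
    show "org i = tgt m \<Longrightarrow> g i 0 = g m (len w m)" using cont i m by blast
    show "tgt i = tgt m \<Longrightarrow> g i (len w i) = g m (len w m)" using cont i m by blast
  qed
  obtain i0 where i0: "i0 < N" "org i0 = r \<or> tgt i0 = r" using edge_at r VpV by blast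
  define a where "a = (if org i0 = r then g i0 0 else g i0 (len w i0))"
  have EVr: "EV r a"
  proof (cases "org i0 = r")
    case True then show ?thesis unfolding a_def using cont_org[OF i0(1)] by simp
  next
    case False then show ?thesis unfolding a_def using cont_tgt[OF i0(1)] i0(2) by simp
  qed
  have T2pi: "g i 0 = g i (len w i)" if "i \<in> T" for i
    using gL[OF T_N[OF that]] len_T[OF that] by (simp add: \<alpha>_def)
  have EVall: "EV x a" if x: "x \<in> Vp" for x
  proof (rule T_induct[where P = "\<lambda>x. EV x a", OF EVr _ x])
    fix i assume iT: "i \<in> T"
    have iN: "i < N" using T_N[OF iT] .
    show "EV (org i) a = EV (tgt i) a"
    proof
      assume "EV (org i) a"
      then have "g i 0 = a" using iN unfolding EV_def by blast
      then show "EV (tgt i) a" using cont_tgt[OF iN] T2pi[OF iT] by simp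
    next
      assume "EV (tgt i) a"
      then have "g i (len w i) = a" using iN unfolding EV_def by blast
      then show "EV (org i) a" using cont_org[OF iN] T2pi[OF iT] by simp
    qed
  qed
  have leaf0: "\<gamma> i = 0" if i: "i < N" and o: "org i \<notin> Vp" for i
  proof -
    have d: "deg (org i) = 1" using leaf_or_Vp[OF conjunct1[OF inV[OF i]]] o by blast
    have "(\<Sum>m\<in>{m. m < N \<and> org m = org i}. edge_deriv (len w) g m 0)
              - (\<Sum>m\<in>{m. m < N \<and> tgt m = org i}. edge_deriv (len w) g m (len w m)) = 0"
      using kg inV[OF i] by blast
    then show ?thesis unfolding leaf_sets_org[OF d i refl] \<gamma>_def by simp
  qed
  have leafL: "edge_deriv (len w) g i (len w i) = 0" if i: "i < N" and o: "tgt i \<notin> Vp" for i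
  proof -
    have d: "deg (tgt i) = 1" using leaf_or_Vp[OF conjunct2[OF inV[OF i]]] o by blast
    have "(\<Sum>m\<in>{m. m < N \<and> org m = tgt i}. edge_deriv (len w) g m 0)
              - (\<Sum>m\<in>{m. m < N \<and> tgt m = tgt i}. edge_deriv (len w) g m (len w m)) = 0"
      using kg inV[OF i] by blast
    then show ?thesis unfolding leaf_sets_tgt[OF d i refl] by simp
  qed
  have hT: "\<alpha> i = a" if "i \<in> T" for i
    using EVall[of "org i"] T_Vp[OF that] T_N[OF that] unfolding EV_def \<alpha>_def by blast
  have hQ: "\<alpha> i = a * Aco w i \<and> \<gamma> i = a * Bco w \<beta> i" if iQ: "i \<in> Q" for i
  proof -
    have iN: "i < N" and iT: "i \<notin> T" using iQ by (auto simp: Q_def)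
    consider (E) "i \<in> Ep" | (P1) "org i \<in> Vp" "tgt i \<notin> Vp" | (P2) "org i \<notin> Vp" "tgt i \<in> Vp"
      using Q_cases[OF iQ] by blast
    then show ?thesis
    proof cases
      case E
      have ov: "org i \<in> Vp" "tgt i \<in> Vp" using E by (auto simp: Ep_def)
      define L where "L = lenN (w i)"
      have lL: "len w i = L" using len_Q_Ep[OF iQ E] L_def by simp
      have s0: "sin L \<noteq> 0" unfolding L_def by (rule lenN(2)[OF wnz[OF iQ]])
      have h1r: "cos L + w i * sin L = 1" unfolding L_def by (rule lenN(3)[OF wnz[OF iQ]])
      have h1: "cc L + complex_of_real (w i) * ss L = 1" by (metis h1r of_real_add of_real_mult of_real_1)
      have al: "\<alpha> i = a" using EVall[OF ov(1)] iN unfolding EV_def \<alpha>_def by blast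
      have "g i (len w i) = a" using EVall[OF ov(2)] iN unfolding EV_def by blast
      then have "a * cc L + \<gamma> i * ss L = a" using gL[OF iN] al lL by simp
      moreover have "a * cc L + (a * complex_of_real (w i)) * ss L = a"
        using arg_cong[OF h1, of "\<lambda>z. a * z"] by (simp add: distrib_left mult.assoc)
      ultimately have "a * cc L + \<gamma> i * ss L = a * cc L + (a * complex_of_real (w i)) * ss L" by simp
      then have "\<gamma> i * ss L = (a * complex_of_real (w i)) * ss L" by (rule add_left_imp_eq)
      then have "(\<gamma> i - a * complex_of_real (w i)) * ss L = 0" by (simp add: left_diff_distrib)
      then have "\<gamma> i = a * complex_of_real (w i)" using s0 by simp
      then show ?thesis using al ov iT by (simp add: Aco_def Bco_def)
    next
      case P1
      define L where "L = lenP (w i)"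
      have nE: "i \<notin> Ep" using P1 by (simp add: Ep_def)
      have lL: "len w i = L" using len_Q_nEp[OF iQ nE] L_def by simp
      have c0: "cos L \<noteq> 0" unfolding L_def by (rule lenP(2))
      have sr: "sin L = w i * cos L" unfolding L_def by (rule lenP(3))
      have s: "ss L = complex_of_real (w i) * cc L" by (metis sr of_real_mult)
      have al: "\<alpha> i = a" using EVall[OF P1(1)] iN unfolding EV_def \<alpha>_def by blast
      have "- a * ss L + \<gamma> i * cc L = 0" using leafL[OF iN P1(2)] dL[OF iN] al lL by simp
      then have "(\<gamma> i - a * complex_of_real (w i)) * cc L = 0" unfolding s by (simp add: algebra_simps)
      then have "\<gamma> i = a * complex_of_real (w i)" using c0 by simp
      then show ?thesis using al P1 iT by (simp add: Aco_def Bco_def)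
    next
      case P2
      define L where "L = lenP (w i)"
      have nE: "i \<notin> Ep" using P2 by (simp add: Ep_def)
      have lL: "len w i = L" using len_Q_nEp[OF iQ nE] L_def by simp
      have c0: "cos L \<noteq> 0" unfolding L_def by (rule lenP(2))
      have ga: "\<gamma> i = 0" using leaf0[OF iN P2(1)] .
      have "g i (len w i) = a" using EVall[OF P2(2)] iN unfolding EV_def by blast
      then have "\<alpha> i * cc L = a" using gL[OF iN] ga lL by simp
      then have "\<alpha> i = a * complex_of_real (1 / cos L)" using c0 by (simp add: field_simps)
      then show ?thesis using ga P2 iT lL by (simp add: Aco_def Bco_def)
    qed
  qed
  have dvg: "dv \<gamma> x = a * dv \<beta> x" if x: "x \<in> Vp" for x
  proof -
    have "(\<Sum>i\<in>{i. i < N \<and> org i = x}. \<gamma> i)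
       - (\<Sum>i\<in>{i. i < N \<and> tgt i = x}. (- \<alpha> i * ss (len w i) + \<gamma> i * cc (len w i)))
       = dv \<gamma> x + a * tau w x" by (rule KS[OF hQ hT x])
    moreover have "(\<Sum>i\<in>{i. i < N \<and> tgt i = x}. (- \<alpha> i * ss (len w i) + \<gamma> i * cc (len w i)))
        = (\<Sum>i\<in>{i. i < N \<and> tgt i = x}. edge_deriv (len w) g i (len w i))"
      using dL by (intro sum.cong) auto
    moreover have "(\<Sum>i\<in>{i. i < N \<and> org i = x}. \<gamma> i) = (\<Sum>i\<in>{i. i < N \<and> org i = x}. edge_deriv (len w) g i 0)"
      unfolding \<gamma>_def ..
    ultimately have "dv \<gamma> x + a * tau w x = 0" using kg x VpV by auto
    then have "dv \<gamma> x = - a * tau w x" by (simp add: eq_neg_iff_add_eq_0)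
    then show ?thesis using kir[OF x] by simp
  qed
  have gT: "\<gamma> i = a * \<beta> i" if iT: "i \<in> T" for i
  proof -
    have "dv (\<lambda>i. \<gamma> i - a * \<beta> i) x = 0" if "x \<in> Vp" for x
      using dvg[OF that] dv_diff[of \<gamma> "\<lambda>i. a * \<beta> i" x] dv_scale[of a \<beta> x] by simp
    then have "\<gamma> i - a * \<beta> i = 0" using dv_inj[OF _ iT, of "\<lambda>i. \<gamma> i - a * \<beta> i"] by blast
    then show ?thesis by simp
  qed
  have "\<forall>i<N. \<forall>t\<in>{0..len w i}. g i t = a * ff w \<beta> i t"
  proof (intro allI impI ballI)
    fix i t assume i: "i < N" and t: "t \<in> {0..len w i}"
    have "\<alpha> i = a * Aco w i \<and> \<gamma> i = a * Bco w \<beta> i"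
    proof (cases "i \<in> T")
      case True then show ?thesis using hT gT by (simp add: Aco_def Bco_def)
    next
      case False then show ?thesis using hQ i by (simp add: Q_def)
    qed
    then show "g i t = a * ff w \<beta> i t" using rep[OF i t] by (simp add: ff_def algebra_simps)
  qed
  then show ?thesis by blast
qed

lemma ff_not_loop:
  assumes "2 \<le> N"
  shows "\<not> supported_on_single_loop N org tgt (len w) (ff w \<beta>)"
proof
  assume "supported_on_single_loop N org tgt (len w) (ff w \<beta>)"
  then obtain i where i: "i < N" "\<forall>m<N. m \<noteq> i \<longrightarrow> (\<forall>t\<in>{0..len w m}. ff w \<beta> m t = 0)"
    unfolding supported_on_single_loop_def by blast
  define m where "m = (if i = 0 then 1 else 0::nat)"
  have "m < N" "m \<noteq> i" using assms by (auto simp: m_def)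
  moreover have "0 \<in> {0..len w m}" using len_pos[of m] by simp
  ultimately have "ff w \<beta> m 0 = 0" using i by blast
  then show False using Aco_nz[of m] by (simp add: ff0)
qed

end
end


lemma sum_fib:
  fixes c :: "nat \<Rightarrow> 'a::comm_ring_1"
  assumes "finite Q" and that: "finite S"
  shows "(\<Sum>x\<in>S. \<Sum>i\<in>{i\<in>Q. h i = x}. c i) = (\<Sum>i\<in>Q. c i * of_bool (h i \<in> S))"
proof -
  have "(\<Sum>x\<in>S. \<Sum>i\<in>{i\<in>Q. h i = x}. c i) = (\<Sum>x\<in>S. \<Sum>i\<in>Q. if h i = x then c i else 0)"
    using assms by (simp add: sum.inter_filter)
  also have "\<dots> = (\<Sum>i\<in>Q. \<Sum>x\<in>S. if h i = x then c i else 0)" by (rule sum.swap)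
  also have "\<dots> = (\<Sum>i\<in>Q. c i * of_bool (h i \<in> S))"
    using that by (intro sum.cong) (auto simp: sum.delta)
  finally show ?thesis .
qed

context G begin

lemma card_fibers_sub:
  assumes "finite X"
  shows "(\<Sum>v\<in>X. card {i. i < N \<and> h i = v}) = card {i. i < N \<and> h i \<in> X}"
proof -
  have "(\<Sum>v\<in>X. card {i. i < N \<and> h i = v}) = (\<Sum>v\<in>X. \<Sum>i\<in>{x. x \<in> {i. i < N \<and> h i \<in> X} \<and> h x = v}. (1::nat))"
    using assms by (intro sum.cong) (auto intro!: arg_cong[where f = card])
  also have "\<dots> = (\<Sum>i\<in>{i. i < N \<and> h i \<in> X}. (1::nat))"
    by (rule sum.group) (use assms in auto)
  finally show ?thesis by simp
qed

lemma R_sym: "(a, b) \<in> (R E)\<^sup>* \<Longrightarrow> (b, a) \<in> (R E)\<^sup>*"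
proof (induction rule: rtrancl_induct)
  case base then show ?case by simp
next
  case (step y z)
  have "(z, y) \<in> R E" using step.hyps(2) by (auto simp: R_def)
  then show ?case using step.IH by (rule converse_rtrancl_into_rtrancl)
qed

end

context Tr begin

lemma tau_sum:
  assumes "finite S"
  shows "(\<Sum>x\<in>S. tau w x) = complex_of_real (\<Sum>i\<in>Q. w i * (of_bool (org i \<in> S) + of_bool (tgt i \<in> S)))"
proof -
  have "(\<Sum>x\<in>S. tau w x) = (\<Sum>i\<in>Q. complex_of_real (w i) * of_bool (org i \<in> S)) + (\<Sum>i\<in>Q. complex_of_real (w i) * of_bool (tgt i \<in> S))"
    unfolding tau_def sum.distrib
    by (simp only: sum_fib[OF finQ assms, where h = org] sum_fib[OF finQ assms, where h = tgt])
  also have "\<dots> = complex_of_real (\<Sum>i\<in>Q. w i * (of_bool (org i \<in> S) + of_bool (tgt i \<in> S)))"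
    unfolding sum.distrib[symmetric] of_real_sum by (intro sum.cong) (auto simp: distrib_left)
  finally show ?thesis .
qed

lemma mult_ge1: "i \<in> Q \<Longrightarrow> 1 \<le> (of_bool (org i \<in> Vp) + of_bool (tgt i \<in> Vp) :: real)"
  using edge_has_Vp[OF Vp_ne, of i] by (auto simp: Q_def)

lemma choose_w:
  assumes Q1: "Q1 \<subseteq> Q" "Q1 \<noteq> {}" "Q - Q1 \<noteq> {}"
  shows "\<exists>w. (\<forall>i\<in>Q. w i \<noteq> 0) \<and> (\<forall>i\<in>Q1. w i = 1) \<and> (\<forall>i\<in>Q - Q1. w i < 0) \<and> (\<Sum>x\<in>Vp. tau w x) = 0"
proof -
  define m :: "nat \<Rightarrow> real" where "m i = of_bool (org i \<in> Vp) + of_bool (tgt i \<in> Vp)" for i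
  have f1: "finite Q1" "finite (Q - Q1)" using Q1 finQ finite_subset by auto
  have mp: "0 < m i" if "i \<in> Q" for i
    using mult_ge1[OF that] unfolding m_def by linarith
  have p1: "0 < sum m Q1" using f1(1) Q1 mp by (intro sum_pos) auto
  have p2: "0 < sum m (Q - Q1)" using f1(2) Q1 mp by (intro sum_pos) auto
  define x0 where "x0 = sum m Q1 / sum m (Q - Q1)"
  have x0: "0 < x0" unfolding x0_def using p1 p2 by simp
  define w where "w i = (if i \<in> Q1 then 1 else - x0)" for i
  have "(\<Sum>i\<in>Q. w i * m i) = (\<Sum>i\<in>Q1. w i * m i) + (\<Sum>i\<in>Q - Q1. w i * m i)"
    using sum.subset_diff[OF Q1(1) finQ, of "\<lambda>i. w i * m i"] by (simp add: add.commute)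
  also have "\<dots> = sum m Q1 - x0 * sum m (Q - Q1)"
    unfolding w_def by (simp add: sum_distrib_left sum_negf)
  also have "\<dots> = 0" unfolding x0_def using p2 by simp
  finally have "(\<Sum>i\<in>Q. w i * m i) = 0" .
  then have "(\<Sum>x\<in>Vp. tau w x) = 0" using tau_sum[OF finVp, of w] unfolding m_def by simp
  moreover have "\<forall>i\<in>Q. w i \<noteq> 0" using x0 by (auto simp: w_def)
  moreover have "\<forall>i\<in>Q - Q1. w i < 0" using x0 by (auto simp: w_def)
  ultimately show ?thesis by (intro exI[of _ w]) (auto simp: w_def)
qed

lemma card_Q2: "2 \<le> card Q"
proof -
  have "Q = {..<N} - T" using T_N by (auto simp: Q_def)
  then have "card Q = N - card T" using T_N finT by (simp add: card_Diff_subset subsetI)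
  moreover have "card T = card Vp - 1" by (rule card_T)
  moreover have "3 * card Vp \<le> 2 * N" by (rule card_Vp)
  moreover have "1 \<le> card Vp" using Vp_ne finVp by (simp add: Suc_leI card_gt_0_iff)
  ultimately show ?thesis by linarith
qed

lemma N2: "2 \<le> N"
proof -
  have "1 \<le> card Vp" using Vp_ne finVp by (simp add: Suc_leI card_gt_0_iff)
  then show ?thesis using card_Vp by linarith
qed

lemma generic_w: "\<exists>w. (\<forall>i\<in>Q. w i \<noteq> 0) \<and> (\<Sum>x\<in>Vp. tau w x) = 0"
proof -
  have "Q \<noteq> {}" using card_Q2 by auto
  then obtain q where q: "q \<in> Q" by blast
  have c: "card (Q - {q}) \<ge> 1" using card_Q2 q finQ by simp
  have "Q - {q} \<noteq> {}"
  proof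
    assume e: "Q - {q} = {}"
    have "card (Q - {q}) = 0" using e by (metis card.empty)
    then show False using c by simp
  qed
  then show ?thesis using choose_w[of "{q}"] q by auto
qed

end


context Tr begin

lemma param_end:
  assumes X: "X \<subseteq> Vp" "X \<noteq> {}" and e0: "e0 \<in> T"
    and cl: "\<And>i. i \<in> Ep \<Longrightarrow> i \<noteq> e0 \<Longrightarrow> (org i \<in> X \<longleftrightarrow> tgt i \<in> X)"
  shows "\<exists>i\<in>Q. org i \<in> X \<or> tgt i \<in> X"
proof (rule ccontr)
  assume nq: "\<not> ?thesis"
  have fX: "finite X" using X finVp finite_subset by blast
  define B where "B = {i\<in>T. org i \<in> X \<and> tgt i \<in> X}"
  have cB: "card B \<le> card X - 1" unfolding B_def by (rule count_X[OF X])
  have fB: "finite B" using finT by (simp add: B_def)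
  have sub: "{i. i < N \<and> h i \<in> X} \<subseteq> insert e0 B" if h: "h = org \<or> h = tgt" for h
  proof
    fix i assume i: "i \<in> {i. i < N \<and> h i \<in> X}"
    then have iT: "i \<in> T" using nq h QorT by (auto simp: Q_def)
    show "i \<in> insert e0 B"
    proof (cases "i = e0")
      case False
      have "i \<in> Ep" using iT T_Vp by blast
      then have "org i \<in> X \<and> tgt i \<in> X" using cl[of i] False i h by auto
      then show ?thesis using iT by (simp add: B_def)
    qed simp
  qed
  have c1: "card {i. i < N \<and> h i \<in> X} \<le> card B + 1" if h: "h = org \<or> h = tgt" for h
  proof -
    have "card {i. i < N \<and> h i \<in> X} \<le> card (insert e0 B)" by (rule card_mono) (use fB sub[OF h] in auto)
    also have "\<dots> \<le> card B + 1" using fB by (simp add: card_insert_if)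
    finally show ?thesis .
  qed
  have "(\<Sum>v\<in>X. deg v) = card {i. i < N \<and> org i \<in> X} + card {i. i < N \<and> tgt i \<in> X}"
    unfolding deg_def' sum.distrib card_fibers_sub[OF fX] ..
  also have "\<dots> \<le> 2 * card B + 2" using c1[of org] c1[of tgt] by simp
  also have "\<dots> \<le> 2 * card X"
  proof -
    have "0 < card X" using X(2) fX by (simp add: card_gt_0_iff)
    then show ?thesis using cB by linarith
  qed
  finally have s1: "(\<Sum>v\<in>X. deg v) \<le> 2 * card X" .
  have "3 * card X = (\<Sum>v\<in>X. 3)" by simp
  also have "\<dots> \<le> (\<Sum>v\<in>X. deg v)" using X(1) by (intro sum_mono) (auto simp: Vp_def)
  finally have "3 * card X \<le> 2 * card X" using s1 by simp
  then show False using X(2) fX by (simp add: card_gt_0_iff)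
qed

lemma bridge:
  assumes EE: "E0 = Ep" and e0: "e0 \<in> T" and nc: "\<not> conn (Ep - {e0})"
  shows "\<exists>w. (\<forall>i\<in>Q. w i \<noteq> 0) \<and> (\<Sum>x\<in>Vp. tau w x) = 0 \<and>
           (\<forall>\<beta>. (\<forall>x\<in>Vp. dv \<beta> x = - tau w x) \<longrightarrow> \<beta> e0 \<noteq> 0)"
proof -
  define R' where "R' = R (Ep - {e0})"
  have e0E: "e0 \<in> Ep" using T_Vp[OF e0] by blast
  define oe where "oe = org e0"
  define te where "te = tgt e0"
  have oeV: "oe \<in> Vp" and teV: "te \<in> Vp" using e0E by (auto simp: Ep_def oe_def te_def)
  define S where "S = {x\<in>Vp. (oe, x) \<in> R'\<^sup>*}"
  have oeS: "oe \<in> S" using oeV by (simp add: S_def)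
  have cl: "org i \<in> S \<longleftrightarrow> tgt i \<in> S" if i: "i \<in> Ep" "i \<noteq> e0" for i
  proof -
    have r1: "(org i, tgt i) \<in> R'" and r2: "(tgt i, org i) \<in> R'" using i by (auto simp: R'_def R_def)
    have v: "org i \<in> Vp" "tgt i \<in> Vp" using i by (auto simp: Ep_def)
    show ?thesis using r1 r2 v unfolding S_def by (auto intro: rtrancl_into_rtrancl)
  qed
  have teS: "te \<notin> S"
  proof
    assume "te \<in> S"
    then have ot: "(oe, te) \<in> R'\<^sup>*" by (simp add: S_def)
    have to: "(te, oe) \<in> R'\<^sup>*" using R_sym[OF ot[unfolded R'_def]] by (simp add: R'_def)
    have "(u, v) \<in> R'\<^sup>*" if uv: "(u, v) \<in> (R Ep)\<^sup>*" for u v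
      using uv
    proof (induction rule: rtrancl_induct)
      case base then show ?case by simp
    next
      case (step y z)
      obtain i where i: "i \<in> Ep" "(org i = y \<and> tgt i = z) \<or> (tgt i = y \<and> org i = z)"
        using step.hyps(2) by (auto simp: R_def)
      show ?case
      proof (cases "i = e0")
        case False
        then have "(y, z) \<in> R'" using i by (auto simp: R'_def R_def)
        then show ?thesis using step.IH by (rule rtrancl_into_rtrancl[rotated])
      next
        case True
        then have "(y, z) \<in> R'\<^sup>*" using i ot to by (auto simp: oe_def te_def)
        then show ?thesis using step.IH by (rule rtrancl_trans[rotated])
      qed
    qed
    then have "conn (Ep - {e0})" using conn_Ep unfolding conn_def R'_def by blast
    then show False using nc by simp
  qed
  have SVp: "S \<subseteq> Vp" by (auto simp: S_def)
  have fS: "finite S" using SVp finVp finite_subset by blast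
  have cl2: "org i \<in> Vp - S \<longleftrightarrow> tgt i \<in> Vp - S" if i: "i \<in> Ep" "i \<noteq> e0" for i
    using cl[OF i] i by (auto simp: Ep_def)
  obtain q1 where q1: "q1 \<in> Q" "org q1 \<in> S \<or> tgt q1 \<in> S"
    using param_end[OF SVp _ e0 cl] oeS by blast
  obtain q2 where q2: "q2 \<in> Q" "org q2 \<in> Vp - S \<or> tgt q2 \<in> Vp - S"
    using param_end[of "Vp - S", OF _ _ e0 cl2] teV teS by blast
  define Q1 where "Q1 = {i\<in>Q. org i \<in> S \<or> tgt i \<in> S}"
  have q2n: "q2 \<notin> Q1"
  proof
    assume "q2 \<in> Q1"
    then have a: "org q2 \<in> S \<or> tgt q2 \<in> S" by (simp add: Q1_def)
    have "q2 \<in> Ep" using a q2 SVp by (auto simp: Ep_def Q_def)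
    moreover have "q2 \<noteq> e0" using q2(1) e0 by (auto simp: Q_def)
    ultimately show False using cl[of q2] a q2(2) by auto
  qed
  have Q1s: "Q1 \<subseteq> Q" "Q1 \<noteq> {}" "Q - Q1 \<noteq> {}" using q1 q2 q2n by (auto simp: Q1_def)
  obtain w where w: "\<forall>i\<in>Q. w i \<noteq> 0" "\<forall>i\<in>Q1. w i = 1" "\<forall>i\<in>Q - Q1. w i < 0" "(\<Sum>x\<in>Vp. tau w x) = 0"
    using choose_w[OF Q1s] by blast
  define mS :: "nat \<Rightarrow> real" where "mS i = of_bool (org i \<in> S) + of_bool (tgt i \<in> S)" for i
  have "(\<Sum>i\<in>Q. w i * mS i) = (\<Sum>i\<in>Q1. w i * mS i) + (\<Sum>i\<in>Q - Q1. w i * mS i)"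
    using sum.subset_diff[OF Q1s(1) finQ, of "\<lambda>i. w i * mS i"] by (simp add: add.commute)
  also have "(\<Sum>i\<in>Q - Q1. w i * mS i) = 0" by (intro sum.neutral) (auto simp: mS_def Q1_def)
  also have "(\<Sum>i\<in>Q1. w i * mS i) = (\<Sum>i\<in>Q1. mS i)" using w(2) by simp
  finally have eq: "(\<Sum>i\<in>Q. w i * mS i) = (\<Sum>i\<in>Q1. mS i)" by simp
  have pos: "0 < (\<Sum>i\<in>Q1. mS i)"
  proof (rule sum_pos)
    show "finite Q1" using Q1s(1) finQ finite_subset by blast
    show "Q1 \<noteq> {}" by (rule Q1s(2))
    show "\<And>i. i \<in> Q1 \<Longrightarrow> 0 < mS i" by (auto simp: mS_def Q1_def)
  qed
  have tS0: "(\<Sum>x\<in>S. tau w x) = complex_of_real (\<Sum>i\<in>Q. w i * mS i)"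
    unfolding mS_def by (rule tau_sum[OF fS])
  have tS: "(\<Sum>x\<in>S. tau w x) = complex_of_real (\<Sum>i\<in>Q1. mS i)"
    unfolding tS0 eq ..
  have "\<beta> e0 \<noteq> 0" if kir: "\<forall>x\<in>Vp. dv \<beta> x = - tau w x" for \<beta>
  proof -
    have "(\<Sum>x\<in>S. dv \<beta> x) = (\<Sum>i\<in>T. \<beta> i * (of_bool (org i \<in> S) - of_bool (tgt i \<in> S)))"
      by (rule cut[OF fS])
    also have "\<dots> = \<beta> e0 * (of_bool (org e0 \<in> S) - of_bool (tgt e0 \<in> S))"
    proof (subst sum_single[of _ e0])
      show "finite T" by (rule finT)
      show "\<And>i. i \<in> T \<Longrightarrow> i \<noteq> e0 \<Longrightarrow> \<beta> i * (of_bool (org i \<in> S) - of_bool (tgt i \<in> S)) = 0"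
        using cl T_Vp by auto
    qed (use e0 in simp)
    also have "\<dots> = \<beta> e0" using oeS teS by (simp add: oe_def te_def)
    finally have a: "(\<Sum>x\<in>S. dv \<beta> x) = \<beta> e0" .
    have "(\<Sum>x\<in>S. dv \<beta> x) = - (\<Sum>x\<in>S. tau w x)"
      using kir SVp by (simp add: sum_negf[symmetric] subset_iff)
    then have "\<beta> e0 = - complex_of_real (\<Sum>i\<in>Q1. mS i)" using a tS by simp
    moreover have "complex_of_real (\<Sum>i\<in>Q1. mS i) \<noteq> 0" using pos by (simp only: of_real_eq_0_iff)
    ultimately show ?thesis by (simp only: neg_equal_0_iff_equal) simp
  qed
  then show ?thesis using w by blast
qed

end


context Tr begin

lemma final:
  assumes wnz: "\<And>i. i \<in> Q \<Longrightarrow> w i \<noteq> 0" and s0: "(\<Sum>x\<in>Vp. tau w x) = 0"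
    and tgtc: "\<And>\<beta>. \<forall>x\<in>Vp. dv \<beta> x = - tau w x \<Longrightarrow> snd j \<in> T \<Longrightarrow> fst j \<in> {CB, CD} \<Longrightarrow> \<beta> (snd j) \<noteq> 0"
    and adm: "admissible_index N org tgt j"
  shows "\<exists>l k f. (\<forall>i<N. l i > 0) \<and> k > 0 \<and>
           simple_eigenpair V N org tgt l (k\<^sup>2) f \<and>
           \<not> supported_on_single_loop N org tgt l f \<and>
           trace_k l k f j \<noteq> 0"
proof -
  obtain \<beta> where kir: "\<forall>x\<in>Vp. dv \<beta> x = - tau w x" using dv_surj[OF s0] by blast
  have kir': "\<And>x. x \<in> Vp \<Longrightarrow> dv \<beta> x = - tau w x" using kir by blast
  have pos: "\<forall>i<N. len w i > 0" using len_pos[where w = w, OF wnz] by blast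
  have se: "simple_eigenpair V N org tgt (len w) ((1::real)\<^sup>2) (ff w \<beta>)"
    unfolding simple_eigenpair_def power_one
    using ff_eigen[where w = w, OF wnz kir'] ff_simple[where w = w, OF wnz kir'] by blast
  have nl: "\<not> supported_on_single_loop N org tgt (len w) (ff w \<beta>)"
    by (rule ff_not_loop[where w = w, OF wnz N2])
  obtain a i where j: "j = (a, i)" by (cases j)
  have iN: "i < N" using adm j by (simp add: admissible_index_def)
  have tr: "trace_k (len w) 1 (ff w \<beta>) j \<noteq> 0"
  proof (cases a)
    case CA
    then show ?thesis using j Aco_nz[where w = w, OF wnz] by (simp add: trace_k_def ff0[where w = w, OF wnz])
  next
    case CB
    have "Bco w \<beta> i \<noteq> 0"
    proof (cases "i \<in> T")
      case True
      then show ?thesis using tgtc[OF kir] j CB by (simp add: Bco_def)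
    next
      case False
      then have iQ: "i \<in> Q" using iN by (simp add: Q_def)
      have "org i \<in> Vp"
      proof (rule ccontr)
        assume "org i \<notin> Vp"
        then have "deg (org i) = 1" using leaf_or_Vp[OF conjunct1[OF inV[OF iN]]] by blast
        then show False using adm j CB by (simp add: admissible_index_def)
      qed
      then show ?thesis using der0_Q[where w = w, OF wnz iQ] wnz[OF iQ] by simp
    qed
    then show ?thesis using j CB by (simp add: trace_k_def ff_deriv0[where w = w, OF wnz])
  next
    case CC
    have "ff w \<beta> i (len w i) \<noteq> 0"
    proof (cases "tgt i \<in> Vp")
      case True then show ?thesis using valL[where w = w, OF wnz iN True] by (simp add: ffL[where w = w, OF wnz])
    next
      case False then show ?thesis using valL_leaf_nz[where w = w, OF wnz iN False] by (simp add: ffL[where w = w, OF wnz])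
    qed
    then show ?thesis using j CC by (simp add: trace_k_def)
  next
    case CD
    have "- Aco w i * ss (len w i) + Bco w \<beta> i * cc (len w i) \<noteq> 0"
    proof (cases "i \<in> T")
      case True
      then show ?thesis using tgtc[OF kir] j CD derT[where w = w, OF wnz True] by simp
    next
      case False
      then have iQ: "i \<in> Q" using iN by (simp add: Q_def)
      have "tgt i \<in> Vp"
      proof (rule ccontr)
        assume "tgt i \<notin> Vp"
        then have "deg (tgt i) = 1" using leaf_or_Vp[OF conjunct2[OF inV[OF iN]]] by blast
        then show False using adm j CD by (simp add: admissible_index_def)
      qed
      then show ?thesis using derL_Q[where w = w, OF wnz iQ] wnz[OF iQ] by simp
    qed
    then show ?thesis using j CD by (simp add: trace_k_def ff_derivL[where w = w, OF wnz])
  qed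
  show ?thesis using pos se nl tr by (intro exI[of _ "len w"] exI[of _ 1] exI[of _ "ff w \<beta>"]) simp
qed

end

context G begin

lemma single_case:
  assumes Vp: "Vp = {}" and adm: "admissible_index N org tgt j"
  shows "\<exists>l k f. (\<forall>i<N. l i > 0) \<and> k > 0 \<and>
           simple_eigenpair V N org tgt l (k\<^sup>2) f \<and>
           \<not> supported_on_single_loop N org tgt l f \<and>
           trace_k l k f j \<noteq> 0"
proof -
  note se = single_edge[OF Vp]
  define l :: "nat \<Rightarrow> real" where "l = (\<lambda>i. pi)"
  define f where "f = (\<lambda>(i::nat) t. cc t)"
  have fe: "f i t = 1 * cc t + 0 * ss t" for i t by (simp add: f_def)
  have lp: "0 < l i" for i by (simp add: l_def)
  have ed: "t \<in> {0..l i} \<Longrightarrow> edge_deriv l f i t = - 1 * ss t + 0 * cc t" for i t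
    by (rule trig_edge_deriv[of l i t f 1 0, OF lp]) (simp_all add: fe)
  have ed0: "edge_deriv l f i 0 = 0" for i using ed[of 0 i] lp[of i] by simp
  have edL: "edge_deriv l f i (l i) = 0" for i using ed[of "l i" i] lp[of i] by (simp add: l_def)
  have N1: "\<And>i. i < N \<longleftrightarrow> i = 0" using se(1) by auto
  have eig: "eigenpair V N org tgt l 1 f"
    unfolding eigenpair_def
  proof (intro conjI)
    show "\<forall>i<N. \<forall>t\<in>{0..l i}. (f i has_vector_derivative edge_deriv l f i t) (at t within {0..l i}) \<and>
        (edge_deriv l f i has_vector_derivative - complex_of_real 1 * f i t) (at t within {0..l i})"
    proof (intro allI impI ballI)
      fix i t assume "i < N" and tt: "t \<in> {0..l i}"
      show "(f i has_vector_derivative edge_deriv l f i t) (at t within {0..l i}) \<and>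
        (edge_deriv l f i has_vector_derivative - complex_of_real 1 * f i t) (at t within {0..l i})"
        by (rule trig_ode[of l i t f 1 0, OF lp tt fe])
    qed
    show "\<exists>i<N. \<exists>t\<in>{0..l i}. f i t \<noteq> 0"
    proof -
      have "0 \<in> {0..l 0}" using lp[of 0] by simp
      moreover have "f 0 0 \<noteq> 0" by (simp add: f_def)
      ultimately show ?thesis using Npos by blast
    qed
    show "\<forall>i<N. \<forall>m<N. (org i = org m \<longrightarrow> f i 0 = f m 0) \<and>
        (org i = tgt m \<longrightarrow> f i 0 = f m (l m)) \<and> (tgt i = tgt m \<longrightarrow> f i (l i) = f m (l m))"
      using N1 se(2) by auto
    show "\<forall>v\<in>V. (\<Sum>i\<in>{i. i < N \<and> org i = v}. edge_deriv l f i 0) -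
        (\<Sum>i\<in>{i. i < N \<and> tgt i = v}. edge_deriv l f i (l i)) = 0"
      by (simp add: ed0 edL)
  qed
  have simp1: "\<exists>c. \<forall>i<N. \<forall>t\<in>{0..l i}. g i t = c * f i t" if g: "eigenpair V N org tgt l 1 g" for g
  proof -
    have kg: "\<forall>v\<in>V. (\<Sum>i\<in>{i. i < N \<and> org i = v}. edge_deriv l g i 0)
              - (\<Sum>i\<in>{i. i < N \<and> tgt i = v}. edge_deriv l g i (l i)) = 0"
      using g unfolding eigenpair_def by blast
    have "(\<Sum>i\<in>{i. i < N \<and> org i = org 0}. edge_deriv l g i 0)
              - (\<Sum>i\<in>{i. i < N \<and> tgt i = org 0}. edge_deriv l g i (l i)) = 0"
      using kg inV[OF Npos] by blast
    then have d0: "edge_deriv l g 0 0 = 0" unfolding leaf_sets_org[OF se(3) Npos refl] by simp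
    have "\<forall>i<N. \<forall>t\<in>{0..l i}. g i t = g 0 0 * f i t"
    proof (intro allI impI ballI)
      fix i t assume i: "i < N" and t: "t \<in> {0..l i}"
      have i0: "i = 0" using i N1 by simp
      show "g i t = g 0 0 * f i t" using eig_rep[OF g i t] d0 i0 by (simp add: f_def)
    qed
    then show ?thesis by blast
  qed
  have sep: "simple_eigenpair V N org tgt l ((1::real)\<^sup>2) f"
    unfolding simple_eigenpair_def power_one using eig simp1 by blast
  have nl: "\<not> supported_on_single_loop N org tgt l f"
    unfolding supported_on_single_loop_def using N1 se(2) by auto
  obtain a i where j: "j = (a, i)" by (cases j)
  have i0: "i = 0" using adm j N1 by (simp add: admissible_index_def)
  have tr: "trace_k l 1 f j \<noteq> 0"
  proof (cases a)
    case CA then show ?thesis using j by (simp add: trace_k_def f_def)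
  next
    case CB then show ?thesis using adm j i0 se(3) by (simp add: admissible_index_def)
  next
    case CC then show ?thesis using j by (simp add: trace_k_def f_def l_def)
  next
    case CD then show ?thesis using adm j i0 se(4) by (simp add: admissible_index_def)
  qed
  show ?thesis using lp sep nl tr by (intro exI[of _ l] exI[of _ 1] exI[of _ f]) simp
qed

end

theorem mainTheorem16:
  fixes V :: "'v set" and N :: nat and org tgt :: "nat \<Rightarrow> 'v" and j :: "coeff \<times> nat"
  assumes "assumption_A V N org tgt"
    and "admissible_index N org tgt j"
  shows "\<exists>l k f. (\<forall>i<N. l i > 0) \<and> k > 0 \<and>
           simple_eigenpair V N org tgt l (k\<^sup>2) f \<and>
           \<not> supported_on_single_loop N org tgt l f \<and>
           trace_k l k f j \<noteq> 0"
proof -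
  have Npos: "0 < N" using assms(2) by (simp add: admissible_index_def)
  interpret G V N org tgt by unfold_locales (use assms(1) Npos in auto)
  show ?thesis
  proof (cases "Vp = {}")
    case True
    then show ?thesis by (rule single_case[OF _ assms(2)])
  next
    case False
    define i0 where "i0 = snd j"
    define E0 where "E0 = (if i0 \<in> Ep \<and> conn (Ep - {i0}) then Ep - {i0} else Ep)"
    define r where "r = (SOME r. r \<in> Vp)"
    have r: "r \<in> Vp" unfolding r_def using False by (simp add: some_in_eq)
    have E0s: "E0 \<subseteq> Ep" by (auto simp: E0_def)
    have cE0: "conn E0" using conn_Ep by (auto simp: E0_def)
    interpret Tr V N org tgt E0 r by unfold_locales (use E0s cE0 r in auto)
    show ?thesis
    proof (cases "i0 \<in> T")
      case True
      have iE: "i0 \<in> Ep" using T_Vp[OF True] by blast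
      have EE: "E0 = Ep" using True T_E0 by (auto simp: E0_def split: if_splits)
      have nc: "\<not> conn (Ep - {i0})" using EE iE by (auto simp: E0_def split: if_splits)
      obtain w where w: "\<forall>i\<in>Q. w i \<noteq> 0" "(\<Sum>x\<in>Vp. tau w x) = 0"
        "\<forall>\<beta>. (\<forall>x\<in>Vp. dv \<beta> x = - tau w x) \<longrightarrow> \<beta> i0 \<noteq> 0"
        using bridge[OF EE True nc] by blast
      show ?thesis
        by (rule final[of w]) (use w assms(2) in \<open>auto simp: i0_def\<close>)
    next
      case False
      obtain w where w: "\<forall>i\<in>Q. w i \<noteq> 0" "(\<Sum>x\<in>Vp. tau w x) = 0"
        using generic_w by blast
      show ?thesis
        by (rule final[of w]) (use w assms(2) False in \<open>auto simp: i0_def\<close>)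
    qed
  qed
qed


end
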